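(* Let $(\Gamma,\mathfrak o,\mathfrak m,\mathfrak q)$ be a quantized Brauer graph and $A_\Gamma$ the associated Brauer graph algebra, and let $d\ge3$. Then $A_\Gamma$ is $d$-homogeneous if and only if $\Gamma$ is a star with $n$ edges for some $n\ge1$ such that $n$ divides $d-1$, the multiplicity of the central vertex is $\frac{d-1}{n}$ and all other multiplicities are $1$. In this case $A_\Gamma$ is isomorphic to the symmetric Nakayama algebra $KQ/I$, where $Q$ is an oriented cycle of length $n$ and $I$ is the ideal generated by all paths of length $d$.
   Context: Let $K$ be a field. A Brauer graph $(\Gamma,\mathfrak o,\mathfrak m)$ consists of a finite connected graph $\Gamma$ with at least one edge (loops and multiple edges allowed), a multiplicity function $\mathfrak m:\Gamma_0\to\mathbb Z_{>0}$ on the vertex set $\Gamma_0$, and, for each vertex $\alpha$, a cyclic ordering $\mathfrak o$ of the edges incident with $\alpha$ (a loop at $\alpha$ occurs twice in this cyclic ordering, the two occurrences being treated as distinct). The valency $\mathrm{val}(\alpha)$ is the number of edges incident with $\alpha$, loops counted twice. An edge $t$ is the successor of $s$ at $\alpha$ if $t$ directly follows $s$ in the cyclic ordering at $\alpha$ (if $\mathrm{val}(\alpha)=1$ the unique edge is its own successor). An edge $s$ is truncated at $\alpha$ if $\mathrm{val}(\alpha)=1$, $\mathfrak m(\alpha)=1$ and $s$ is the edge at $\alpha$; $s$ is a truncated edge if it is truncated at one of its endpoints. The successor sequence of $s$ at $\alpha$ is $s=s_0,s_1,\dots,s_{\mathrm{val}(\alpha)-1}$ with $s_{i+1}$ the successor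 of $s_i$ at $\alpha$. A quantizing function $\mathfrak q$ assigns $\mathfrak q_{s,\alpha}\in K\setminus\{0\}$ to each pair $(s,\alpha)$ with $s$ incident with $\alpha$ and $s$ not truncated at either endpoint; $(\Gamma,\mathfrak o,\mathfrak m,\mathfrak q)$ is a quantized Brauer graph. The Brauer graph algebra $A_\Gamma=KQ_\Gamma/I_\Gamma$ (paths written left to right) is: if $\Gamma=\mathbb A_2$ with both multiplicities $1$, $A_\Gamma=K[x]/(x^2)$. Otherwise $Q_\Gamma$ has a vertex $v_s$ for each edge $s$, and for each vertex $\alpha$ and each occurrence of $t$ as the successor of $s$ at $\alpha$ with $s$ not truncated at $\alpha$, an arrow $v_s\to v_t$. For $s$ at $\alpha$ not truncated at $\alpha$, with successor sequence $s_0,\dots,s_{v-1}$, $v=\mathrm{val}(\alpha)$, $s_v=s_0$, let $C_{s,\alpha}=a_0a_1\cdots a_{v-1}$, where $a_r$ is the arrow for $s_{r+1}$ succeeding $s_r$ at $\alpha$. $I_\Gamma$ is generated by: type one: for each edge $s$ with endpoints $\alpha,\beta$ not truncated at either, $\mathfrak q_{s,\alpha}C_{s,\alpha}^{\mathfrak m(\alpha)}-\mathfrak q_{s,\beta}C_{s,\beta}^{\mathfrak m(\beta)}$; type two: for each edge $s$ truncated at $\alpha$ with other endpoint $\beta$, writing $C_{s,\beta}=b_0b_1\cdots b_{\mathrm{val}(\beta)-1}$, the path $C_{s,\beta}^{\mathfrak m(\beta)}b_0$; type three: each path $ab$ of length $2$ in $Q_\Gamma$ that is not a subpath of any $C_{t,\gamma}$.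 A star with $n$ edges is a tree with one central vertex joined by $n$ edges to $n$ further vertices of valency $1$ (for $n=1$ it is $\mathbb A_2$, and the "central vertex" is either endpoint). For $d\ge2$, $KQ/I$ is $d$-homogeneous if $I$ has a minimal generating set consisting of homogeneous elements of length exactly $d$ (path-length grading). *)

theory Defs
  imports Main
begin

section \<open>Quivers, paths, path algebras (paths written left to right)\<close>

record ('a, 'b) quiver =
  qverts :: "'a set"
  qarrs  :: "'b set"
  qsrc   :: "'b \<Rightarrow> 'a"
  qtgt   :: "'b \<Rightarrow> 'a"

datatype ('a, 'b) qpath = Triv 'a | Arrs "'b list"

fun valid_path :: "('a, 'b) quiver \<Rightarrow> ('a, 'b) qpath \<Rightarrow> bool" where
  "valid_path Q (Triv v) = (v \<in> qverts Q)"
| "valid_path Q (Arrs xs) = (xs \<noteq> [] \<and> set xs \<subseteq> qarrs Q \<and>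
      (\<forall>i. Suc i < length xs \<longrightarrow> qtgt Q (xs ! i) = qsrc Q (xs ! Suc i)))"

fun plen :: "('a, 'b) qpath \<Rightarrow> nat" where
  "plen (Triv v) = 0"
| "plen (Arrs xs) = length xs"

fun pstart :: "('a, 'b) quiver \<Rightarrow> ('a, 'b) qpath \<Rightarrow> 'a" where
  "pstart Q (Triv v) = v"
| "pstart Q (Arrs xs) = qsrc Q (hd xs)"

fun pend :: "('a, 'b) quiver \<Rightarrow> ('a, 'b) qpath \<Rightarrow> 'a" where
  "pend Q (Triv v) = v"
| "pend Q (Arrs xs) = qtgt Q (last xs)"

text \<open>Concatenation of paths; None encodes the zero product.\<close>
definition pcat :: "('a, 'b) quiver \<Rightarrow> ('a, 'b) qpath \<Rightarrow> ('a, 'b) qpath \<Rightarrow> ('a, 'b) qpath option" where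
  "pcat Q p1 p2 =
     (if pend Q p1 \<noteq> pstart Q p2 then None
      else Some (case (p1, p2) of
                   (Triv _, _) \<Rightarrow> p2
                 | (_, Triv _) \<Rightarrow> p1
                 | (Arrs xs, Arrs ys) \<Rightarrow> Arrs (xs @ ys)))"

definition path_algebra :: "('a, 'b) quiver \<Rightarrow> (('a, 'b) qpath \<Rightarrow> 'k::field) set" where
  "path_algebra Q = {f. finite {p. f p \<noteq> 0} \<and> (\<forall>p. f p \<noteq> 0 \<longrightarrow> valid_path Q p)}"

definition pzero :: "('a, 'b) qpath \<Rightarrow> 'k::field" where
  "pzero = (\<lambda>p. 0)"

definition padd :: "(('a, 'b) qpath \<Rightarrow> 'k::field) \<Rightarrow> (('a, 'b) qpath \<Rightarrow> 'k) \<Rightarrow> ('a, 'b) qpath \<Rightarrow> 'k" where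
  "padd f g = (\<lambda>p. f p + g p)"

definition psub :: "(('a, 'b) qpath \<Rightarrow> 'k::field) \<Rightarrow> (('a, 'b) qpath \<Rightarrow> 'k) \<Rightarrow> ('a, 'b) qpath \<Rightarrow> 'k" where
  "psub f g = (\<lambda>p. f p - g p)"

definition psmult :: "'k::field \<Rightarrow> (('a, 'b) qpath \<Rightarrow> 'k) \<Rightarrow> ('a, 'b) qpath \<Rightarrow> 'k" where
  "psmult c f = (\<lambda>p. c * f p)"

definition pmult :: "('a, 'b) quiver \<Rightarrow> (('a, 'b) qpath \<Rightarrow> 'k::field) \<Rightarrow> (('a, 'b) qpath \<Rightarrow> 'k) \<Rightarrow> ('a, 'b) qpath \<Rightarrow> 'k" where
  "pmult Q f g = (\<lambda>p. \<Sum>(p1, p2) \<in> {(p1, p2). f p1 \<noteq> 0 \<and> g p2 \<noteq> 0 \<and> pcat Q p1 p2 = Some p}.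
                          f p1 * g p2)"

definition pone :: "('a, 'b) quiver \<Rightarrow> ('a, 'b) qpath \<Rightarrow> 'k::field" where
  "pone Q = (\<lambda>p. case p of Triv v \<Rightarrow> (if v \<in> qverts Q then 1 else 0) | Arrs _ \<Rightarrow> 0)"

definition pbasis :: "('a, 'b) qpath \<Rightarrow> ('a, 'b) qpath \<Rightarrow> 'k::field" where
  "pbasis p = (\<lambda>q. if q = p then 1 else 0)"

inductive_set gen_ideal :: "('a, 'b) quiver \<Rightarrow> (('a, 'b) qpath \<Rightarrow> 'k::field) set \<Rightarrow> (('a, 'b) qpath \<Rightarrow> 'k) set"
  for Q R where
  gen: "r \<in> R \<Longrightarrow> r \<in> gen_ideal Q R"
| zero: "pzero \<in> gen_ideal Q R"
| add: "x \<in> gen_ideal Q R \<Longrightarrow> y \<in> gen_ideal Q R \<Longrightarrow> padd x y \<in> gen_ideal Q R"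
| lmult: "x \<in> gen_ideal Q R \<Longrightarrow> a \<in> path_algebra Q \<Longrightarrow> pmult Q a x \<in> gen_ideal Q R"
| rmult: "x \<in> gen_ideal Q R \<Longrightarrow> a \<in> path_algebra Q \<Longrightarrow> pmult Q x a \<in> gen_ideal Q R"

definition homogeneous :: "('a, 'b) quiver \<Rightarrow> nat \<Rightarrow> (('a, 'b) qpath \<Rightarrow> 'k::field) \<Rightarrow> bool" where
  "homogeneous Q d f \<longleftrightarrow> f \<in> path_algebra Q \<and> (\<forall>p. f p \<noteq> 0 \<longrightarrow> plen p = d)"

definition d_homogeneous :: "('a, 'b) quiver \<Rightarrow> (('a, 'b) qpath \<Rightarrow> 'k::field) set \<Rightarrow> nat \<Rightarrow> bool" where
  "d_homogeneous Q I d \<longleftrightarrow>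
     (\<exists>S. S \<subseteq> {f. homogeneous Q d f} \<and> gen_ideal Q S = I \<and>
          (\<forall>S'. S' \<subset> S \<longrightarrow> gen_ideal Q S' \<noteq> I))"

text \<open>K-algebra isomorphism KQ1/I1 = KQ2/I2, expressed via a map on representatives.\<close>
definition quot_alg_iso ::
  "('a, 'b) quiver \<Rightarrow> (('a, 'b) qpath \<Rightarrow> 'k::field) set \<Rightarrow>
   ('c, 'd) quiver \<Rightarrow> (('c, 'd) qpath \<Rightarrow> 'k) set \<Rightarrow> bool" where
  "quot_alg_iso Q1 I1 Q2 I2 \<longleftrightarrow>
     (\<exists>\<phi>. (\<forall>x \<in> path_algebra Q1. \<phi> x \<in> path_algebra Q2) \<and>
          (\<forall>x \<in> path_algebra Q1. \<forall>y \<in> path_algebra Q1.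
              psub (\<phi> (padd x y)) (padd (\<phi> x) (\<phi> y)) \<in> I2) \<and>
          (\<forall>c. \<forall>x \<in> path_algebra Q1. psub (\<phi> (psmult c x)) (psmult c (\<phi> x)) \<in> I2) \<and>
          (\<forall>x \<in> path_algebra Q1. \<forall>y \<in> path_algebra Q1.
              psub (\<phi> (pmult Q1 x y)) (pmult Q2 (\<phi> x) (\<phi> y)) \<in> I2) \<and>
          psub (\<phi> (pone Q1)) (pone Q2) \<in> I2 \<and>
          (\<forall>x \<in> path_algebra Q1. \<phi> x \<in> I2 \<longleftrightarrow> x \<in> I1) \<and>
          (\<forall>y \<in> path_algebra Q2. \<exists>x \<in> path_algebra Q1. psub (\<phi> x) y \<in> I2))"

text \<open>A Brauer graph is given by a vertex set V, an edge set E, for each vertex \<alpha> a list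
  ord \<alpha> representing the cyclic ordering of the edges incident with \<alpha> (a loop occurs twice),
  and a multiplicity m.  Each edge occurs exactly twice in total (once at each endpoint,
  twice at the same vertex for a loop).  Valency of \<alpha> = length (ord \<alpha>).\<close>

definition bg_adj :: "'v set \<Rightarrow> ('v \<Rightarrow> 'e list) \<Rightarrow> ('v \<times> 'v) set" where
  "bg_adj V ord = {(\<alpha>, \<beta>). \<alpha> \<in> V \<and> \<beta> \<in> V \<and> (\<exists>s. s \<in> set (ord \<alpha>) \<and> s \<in> set (ord \<beta>))}"

definition brauer_graph :: "'v set \<Rightarrow> 'e set \<Rightarrow> ('v \<Rightarrow> 'e list) \<Rightarrow> ('v \<Rightarrow> nat) \<Rightarrow> bool" where
  "brauer_graph V E ord m \<longleftrightarrow>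
     finite V \<and> finite E \<and> E \<noteq> {} \<and>
     (\<forall>\<alpha> \<in> V. set (ord \<alpha>) \<subseteq> E) \<and>
     (\<forall>s \<in> E. (\<Sum>\<alpha> \<in> V. count_list (ord \<alpha>) s) = 2) \<and>
     (\<forall>\<alpha> \<in> V. \<forall>\<beta> \<in> V. (\<alpha>, \<beta>) \<in> (bg_adj V ord)\<^sup>*) \<and>
     (\<forall>\<alpha> \<in> V. m \<alpha> > 0)"

definition truncated_at :: "('v \<Rightarrow> 'e list) \<Rightarrow> ('v \<Rightarrow> nat) \<Rightarrow> 'e \<Rightarrow> 'v \<Rightarrow> bool" where
  "truncated_at ord m s \<alpha> \<longleftrightarrow> length (ord \<alpha>) = 1 \<and> m \<alpha> = 1 \<and> ord \<alpha> = [s]"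

definition truncated_edge :: "'v set \<Rightarrow> ('v \<Rightarrow> 'e list) \<Rightarrow> ('v \<Rightarrow> nat) \<Rightarrow> 'e \<Rightarrow> bool" where
  "truncated_edge V ord m s \<longleftrightarrow> (\<exists>\<alpha> \<in> V. s \<in> set (ord \<alpha>) \<and> truncated_at ord m s \<alpha>)"

definition quantized_brauer_graph ::
  "'v set \<Rightarrow> 'e set \<Rightarrow> ('v \<Rightarrow> 'e list) \<Rightarrow> ('v \<Rightarrow> nat) \<Rightarrow> ('e \<Rightarrow> 'v \<Rightarrow> 'k::field) \<Rightarrow> bool" where
  "quantized_brauer_graph V E ord m q \<longleftrightarrow>
     brauer_graph V E ord m \<and>
     (\<forall>\<alpha> \<in> V. \<forall>s \<in> set (ord \<alpha>). \<not> truncated_edge V ord m s \<longrightarrow> q s \<alpha> \<noteq> 0)"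

text \<open>Half-edges (occurrences of edges in the cyclic orderings): (\<alpha>, i) with i < val \<alpha>.\<close>
definition halfedges :: "'v set \<Rightarrow> ('v \<Rightarrow> 'e list) \<Rightarrow> ('v \<times> nat) set" where
  "halfedges V ord = {(\<alpha>, i). \<alpha> \<in> V \<and> i < length (ord \<alpha>)}"

definition hedge :: "('v \<Rightarrow> 'e list) \<Rightarrow> 'v \<times> nat \<Rightarrow> 'e" where
  "hedge ord h = ord (fst h) ! snd h"

definition hsucc :: "('v \<Rightarrow> 'e list) \<Rightarrow> 'v \<times> nat \<Rightarrow> 'v \<times> nat" where
  "hsucc ord h = (fst h, Suc (snd h) mod length (ord (fst h)))"

text \<open>C_{s,\<alpha>} for the occurrence h of s at \<alpha>: the arrows a_0 ... a_{val-1}, where the arrow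
  a_r is the occurrence s_r (whose successor is s_{r+1}).\<close>
definition bcycle :: "('v \<Rightarrow> 'e list) \<Rightarrow> 'v \<times> nat \<Rightarrow> ('v \<times> nat) list" where
  "bcycle ord h = map (\<lambda>k. (fst h, (snd h + k) mod length (ord (fst h)))) [0..<length (ord (fst h))]"

definition bcycle_pow :: "('v \<Rightarrow> 'e list) \<Rightarrow> ('v \<Rightarrow> nat) \<Rightarrow> 'v \<times> nat \<Rightarrow> ('v \<times> nat) list" where
  "bcycle_pow ord m h = concat (replicate (m (fst h)) (bcycle ord h))"

definition is_A2_11 :: "'v set \<Rightarrow> 'e set \<Rightarrow> ('v \<Rightarrow> 'e list) \<Rightarrow> ('v \<Rightarrow> nat) \<Rightarrow> bool" where
  "is_A2_11 V E ord m \<longleftrightarrow>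
     (\<exists>\<alpha> \<beta> s. \<alpha> \<noteq> \<beta> \<and> V = {\<alpha>, \<beta>} \<and> E = {s} \<and> ord \<alpha> = [s] \<and> ord \<beta> = [s] \<and>
               m \<alpha> = 1 \<and> m \<beta> = 1)"

text \<open>Vertices are the edges of Gamma; arrows are the occurrences
  (half-edges) h of edges s at vertices \<alpha> with s not truncated at \<alpha>, going from s to its
  successor.  In the special case A_2 with multiplicities 1, the quiver of K[x]/(x^2):
  one vertex and one loop.\<close>
definition bg_quiver :: "'v set \<Rightarrow> 'e set \<Rightarrow> ('v \<Rightarrow> 'e list) \<Rightarrow> ('v \<Rightarrow> nat) \<Rightarrow> ('e, 'v \<times> nat) quiver" where
  "bg_quiver V E ord m =
     (if is_A2_11 V E ord m then
        \<lparr>qverts = E, qarrs = {(SOME \<alpha>. \<alpha> \<in> V, 0)}, qsrc = hedge ord, qtgt = hedge ord\<rparr>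
      else
        \<lparr>qverts = E,
         qarrs = {h \<in> halfedges V ord. \<not> truncated_at ord m (hedge ord h) (fst h)},
         qsrc = hedge ord,
         qtgt = (\<lambda>h. hedge ord (hsucc ord h))\<rparr>)"

definition bg_rel_one ::
  "'v set \<Rightarrow> 'e set \<Rightarrow> ('v \<Rightarrow> 'e list) \<Rightarrow> ('v \<Rightarrow> nat) \<Rightarrow> ('e \<Rightarrow> 'v \<Rightarrow> 'k::field) \<Rightarrow>
   (('e, 'v \<times> nat) qpath \<Rightarrow> 'k) set" where
  "bg_rel_one V E ord m q =
     {psub (psmult (q s (fst h1)) (pbasis (Arrs (bcycle_pow ord m h1))))
           (psmult (q s (fst h2)) (pbasis (Arrs (bcycle_pow ord m h2)))) | s h1 h2.
        s \<in> E \<and> \<not> truncated_edge V ord m s \<and>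
        h1 \<in> halfedges V ord \<and> h2 \<in> halfedges V ord \<and> h1 \<noteq> h2 \<and>
        hedge ord h1 = s \<and> hedge ord h2 = s}"

definition bg_rel_two ::
  "'v set \<Rightarrow> 'e set \<Rightarrow> ('v \<Rightarrow> 'e list) \<Rightarrow> ('v \<Rightarrow> nat) \<Rightarrow> (('e, 'v \<times> nat) qpath \<Rightarrow> 'k::field) set" where
  "bg_rel_two V E ord m =
     {pbasis (Arrs (bcycle_pow ord m h2 @ [h2])) | s h1 h2.
        s \<in> E \<and> h1 \<in> halfedges V ord \<and> h2 \<in> halfedges V ord \<and> h1 \<noteq> h2 \<and>
        hedge ord h1 = s \<and> hedge ord h2 = s \<and> truncated_at ord m s (fst h1)}"

definition bg_rel_three ::
  "'v set \<Rightarrow> 'e set \<Rightarrow> ('v \<Rightarrow> 'e list) \<Rightarrow> ('v \<Rightarrow> nat) \<Rightarrow> (('e, 'v \<times> nat) qpath \<Rightarrow> 'k::field) set" where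
  "bg_rel_three V E ord m =
     (let Q = bg_quiver V E ord m in
      {pbasis (Arrs [a, b]) | a b.
        a \<in> qarrs Q \<and> b \<in> qarrs Q \<and> qtgt Q a = qsrc Q b \<and>
        \<not> (\<exists>h \<in> qarrs Q. \<exists>u w. bcycle ord h = u @ [a, b] @ w) \<and>
        \<not> (a = b \<and> length (ord (fst a)) = 1)})"

definition bg_relations ::
  "'v set \<Rightarrow> 'e set \<Rightarrow> ('v \<Rightarrow> 'e list) \<Rightarrow> ('v \<Rightarrow> nat) \<Rightarrow> ('e \<Rightarrow> 'v \<Rightarrow> 'k::field) \<Rightarrow>
   (('e, 'v \<times> nat) qpath \<Rightarrow> 'k) set" where
  "bg_relations V E ord m q =
     (if is_A2_11 V E ord m then {pbasis (Arrs [(SOME \<alpha>. \<alpha> \<in> V, 0), (SOME \<alpha>. \<alpha> \<in> V, 0)])}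
      else bg_rel_one V E ord m q \<union> bg_rel_two V E ord m \<union> bg_rel_three V E ord m)"

definition bg_ideal ::
  "'v set \<Rightarrow> 'e set \<Rightarrow> ('v \<Rightarrow> 'e list) \<Rightarrow> ('v \<Rightarrow> nat) \<Rightarrow> ('e \<Rightarrow> 'v \<Rightarrow> 'k::field) \<Rightarrow>
   (('e, 'v \<times> nat) qpath \<Rightarrow> 'k) set" where
  "bg_ideal V E ord m q = gen_ideal (bg_quiver V E ord m) (bg_relations V E ord m q)"

text \<open>Gamma is a star with n edges and central vertex c: c is joined by each of the n edges
  (each occurring once at c) to n further vertices, each of valency 1.\<close>
definition is_star :: "'v set \<Rightarrow> 'e set \<Rightarrow> ('v \<Rightarrow> 'e list) \<Rightarrow> 'v \<Rightarrow> nat \<Rightarrow> bool" where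
  "is_star V E ord c n \<longleftrightarrow>
     c \<in> V \<and> card E = n \<and> card V = n + 1 \<and>
     (\<forall>s \<in> E. count_list (ord c) s = 1) \<and>
     (\<forall>\<alpha> \<in> V - {c}. length (ord \<alpha>) = 1)"

definition cycle_quiver :: "nat \<Rightarrow> (nat, nat) quiver" where
  "cycle_quiver n = \<lparr>qverts = {..<n}, qarrs = {..<n}, qsrc = id, qtgt = (\<lambda>i. Suc i mod n)\<rparr>"

definition paths_length_ideal :: "nat \<Rightarrow> nat \<Rightarrow> ((nat, nat) qpath \<Rightarrow> 'k::field) set" where
  "paths_length_ideal n d =
     gen_ideal (cycle_quiver n) {pbasis p | p. valid_path (cycle_quiver n) p \<and> plen p = d}"

end

theory Submission
  imports Defs
begin


lemma pcat_plen: "pcat Q p1 p2 = Some p \<Longrightarrow> plen p = plen p1 + plen p2"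
  by (auto simp: pcat_def split: qpath.splits if_splits)

lemma pcat_len0_left: "pcat Q p1 p2 = Some p \<Longrightarrow> plen p1 = 0 \<Longrightarrow> plen p2 > 0 \<Longrightarrow> p = p2"
  by (cases p1; cases p2) (auto simp: pcat_def split: if_splits)

lemma pcat_len0_right: "pcat Q p1 p2 = Some p \<Longrightarrow> plen p2 = 0 \<Longrightarrow> plen p1 > 0 \<Longrightarrow> p = p1"
  by (cases p1; cases p2) (auto simp: pcat_def split: if_splits)

lemma gen_ideal_supp:
  assumes R: "\<And>r p. r \<in> R \<Longrightarrow> r p \<noteq> 0 \<Longrightarrow> P p"
    and L: "\<And>p1 p2 p. pcat Q p1 p2 = Some p \<Longrightarrow> P p2 \<Longrightarrow> P p"
    and Rt: "\<And>p1 p2 p. pcat Q p1 p2 = Some p \<Longrightarrow> P p1 \<Longrightarrow> P p"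
    and x: "x \<in> gen_ideal Q R"
  shows "x p \<noteq> 0 \<Longrightarrow> P p"
  using x
proof (induction arbitrary: p rule: gen_ideal.induct)
  case (gen r) then show ?case using R by blast
next
  case zero then show ?case by (simp add: pzero_def)
next
  case (add x y) then show ?case by (cases "x p = 0") (auto simp: padd_def)
next
  case (lmult x a)
  show ?case
  proof (rule ccontr)
    assume np: "\<not> P p"
    have "{(p1, p2). a p1 \<noteq> 0 \<and> x p2 \<noteq> 0 \<and> pcat Q p1 p2 = Some p} = {}"
      using lmult.IH L np by blast
    then show False using lmult.prems by (simp only: pmult_def sum.empty) simp
  qed
next
  case (rmult x a)
  show ?case
  proof (rule ccontr)
    assume np: "\<not> P p"
    have "{(p1, p2). x p1 \<noteq> 0 \<and> a p2 \<noteq> 0 \<and> pcat Q p1 p2 = Some p} = {}"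
      using rmult.IH Rt np by blast
    then show False using rmult.prems by (simp only: pmult_def sum.empty) simp
  qed
qed

lemma valid_pcat:
  assumes "valid_path Q p1" "valid_path Q p2" "pcat Q p1 p2 = Some p"
  shows "valid_path Q p"
proof (cases p1)
  case (Triv v) then show ?thesis using assms by (auto simp: pcat_def split: if_splits)
next
  case (Arrs xs)
  show ?thesis
  proof (cases p2)
    case (Triv w) then show ?thesis using assms Arrs by (auto simp: pcat_def split: if_splits)
  next
    case (Arrs ys)
    have p: "p = Arrs (xs @ ys)" and e: "qtgt Q (last xs) = qsrc Q (hd ys)"
      using assms \<open>p1 = Arrs xs\<close> Arrs by (auto simp: pcat_def split: if_splits)
    have xs: "xs \<noteq> []" "set xs \<subseteq> qarrs Q" "\<forall>i. Suc i < length xs \<longrightarrow> qtgt Q (xs ! i) = qsrc Q (xs ! Suc i)"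
      using assms(1) \<open>p1 = Arrs xs\<close> by auto
    have ys: "ys \<noteq> []" "set ys \<subseteq> qarrs Q" "\<forall>i. Suc i < length ys \<longrightarrow> qtgt Q (ys ! i) = qsrc Q (ys ! Suc i)"
      using assms(2) Arrs by auto
    have "\<forall>i. Suc i < length (xs @ ys) \<longrightarrow> qtgt Q ((xs @ ys) ! i) = qsrc Q ((xs @ ys) ! Suc i)"
    proof (intro allI impI)
      fix i assume i: "Suc i < length (xs @ ys)"
      consider "Suc i < length xs" | "Suc i = length xs" | "Suc i > length xs" by linarith
      then show "qtgt Q ((xs @ ys) ! i) = qsrc Q ((xs @ ys) ! Suc i)"
      proof cases
        case 1 then show ?thesis using xs by (simp add: nth_append)
      next
        case 2 then have ii: "i = length xs - 1" by simp
        show ?thesis using e xs ys 2 by (simp add: nth_append last_conv_nth hd_conv_nth ii)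
      next
        case 3
        then have "Suc (i - length xs) < length ys" "Suc i - length xs = Suc (i - length xs)" using i by auto
        then show ?thesis using 3 ys by (simp add: nth_append)
      qed
    qed
    then show ?thesis using p xs ys by auto
  qed
qed

lemma pmult_supp: "pmult Q f g p \<noteq> 0 \<Longrightarrow> \<exists>p1 p2. f p1 \<noteq> 0 \<and> g p2 \<noteq> 0 \<and> pcat Q p1 p2 = Some p"
proof (rule ccontr)
  assume a: "pmult Q f g p \<noteq> 0" "\<not> (\<exists>p1 p2. f p1 \<noteq> 0 \<and> g p2 \<noteq> 0 \<and> pcat Q p1 p2 = Some p)"
  then have "{(p1, p2). f p1 \<noteq> 0 \<and> g p2 \<noteq> 0 \<and> pcat Q p1 p2 = Some p} = {}" by auto
  then show False using a(1) by (simp only: pmult_def sum.empty) simp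
qed

lemma pmult_PA:
  assumes "f \<in> path_algebra Q" "g \<in> path_algebra Q"
  shows "pmult Q f g \<in> path_algebra Q"
proof -
  let ?S = "(\<lambda>(p1, p2). the (pcat Q p1 p2)) ` ({p. f p \<noteq> 0} \<times> {p. g p \<noteq> 0})"
  have "{p. pmult Q f g p \<noteq> 0} \<subseteq> ?S"
  proof
    fix p assume "p \<in> {p. pmult Q f g p \<noteq> 0}"
    then obtain p1 p2 where "f p1 \<noteq> 0" "g p2 \<noteq> 0" "pcat Q p1 p2 = Some p"
      using pmult_supp by blast
    then show "p \<in> ?S" by (auto intro!: image_eqI[where x="(p1,p2)"])
  qed
  moreover have "finite ?S" using assms by (auto simp: path_algebra_def)
  ultimately have fin: "finite {p. pmult Q f g p \<noteq> 0}" by (rule finite_subset)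
  have "\<forall>p. pmult Q f g p \<noteq> 0 \<longrightarrow> valid_path Q p"
    using assms pmult_supp valid_pcat unfolding path_algebra_def by blast
  then show ?thesis using fin by (simp add: path_algebra_def)
qed

lemma padd_PA: "f \<in> path_algebra Q \<Longrightarrow> g \<in> path_algebra Q \<Longrightarrow> padd f g \<in> path_algebra Q"
proof -
  assume a: "f \<in> path_algebra Q" "g \<in> path_algebra Q"
  have "{p. padd f g p \<noteq> 0} \<subseteq> {p. f p \<noteq> 0} \<union> {p. g p \<noteq> 0}" by (auto simp: padd_def)
  then show ?thesis using a unfolding path_algebra_def
    by (auto simp: padd_def intro: finite_subset)
qed

lemma pzero_PA: "pzero \<in> path_algebra Q"
  by (simp add: path_algebra_def pzero_def)

lemma gen_ideal_PA: assumes "R \<subseteq> path_algebra Q" shows "x \<in> gen_ideal Q R \<Longrightarrow> x \<in> path_algebra Q"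
  by (induction rule: gen_ideal.induct) (use assms in \<open>auto intro: pmult_PA padd_PA pzero_PA\<close>)

lemma pbasis_PA: "valid_path Q p \<Longrightarrow> pbasis p \<in> path_algebra Q"
  by (simp add: path_algebra_def pbasis_def)

lemma pone_alt: "pone Q p = (if valid_path Q p \<and> plen p = 0 then 1 else 0)"
  by (cases p) (auto simp: pone_def)



definition qiso :: "('a,'b) quiver \<Rightarrow> ('c,'d) quiver \<Rightarrow> (('c,'d) qpath \<Rightarrow> ('a,'b) qpath) \<Rightarrow> bool" where
"qiso Q1 Q2 U \<longleftrightarrow> (\<forall>p. valid_path Q2 p \<longrightarrow> valid_path Q1 (U p)) \<and> inj_on U {p. valid_path Q2 p} \<and>
   (\<forall>q. valid_path Q1 q \<longrightarrow> (\<exists>p. valid_path Q2 p \<and> U p = q)) \<and>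
   (\<forall>p1 p2. valid_path Q2 p1 \<longrightarrow> valid_path Q2 p2 \<longrightarrow> pcat Q1 (U p1) (U p2) = map_option U (pcat Q2 p1 p2)) \<and>
   (\<forall>p. valid_path Q2 p \<longrightarrow> plen (U p) = plen p)"

definition tr :: "('c,'d) quiver \<Rightarrow> (('c,'d) qpath \<Rightarrow> ('a,'b) qpath) \<Rightarrow> (('a,'b) qpath \<Rightarrow> 'k::field) \<Rightarrow> ('c,'d) qpath \<Rightarrow> 'k" where
  "tr Q2 U x = (\<lambda>p. if valid_path Q2 p then x (U p) else 0)"

definition qinv :: "('c,'d) quiver \<Rightarrow> (('c,'d) qpath \<Rightarrow> ('a,'b) qpath) \<Rightarrow> ('a,'b) qpath \<Rightarrow> ('c,'d) qpath" where
  "qinv Q2 U = inv_into {p. valid_path Q2 p} U"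

lemma qiso_inv:
  assumes "qiso Q1 Q2 U"
  shows "qiso Q2 Q1 (qinv Q2 U)"
    and "\<And>q. valid_path Q1 q \<Longrightarrow> U (qinv Q2 U q) = q \<and> valid_path Q2 (qinv Q2 U q)"
    and "\<And>p. valid_path Q2 p \<Longrightarrow> qinv Q2 U (U p) = p"
proof -
  have v: "\<And>p. valid_path Q2 p \<Longrightarrow> valid_path Q1 (U p)" and inj: "inj_on U {p. valid_path Q2 p}"
    and sur: "\<And>q. valid_path Q1 q \<Longrightarrow> \<exists>p. valid_path Q2 p \<and> U p = q"
    and c: "\<And>p1 p2. valid_path Q2 p1 \<Longrightarrow> valid_path Q2 p2 \<Longrightarrow> pcat Q1 (U p1) (U p2) = map_option U (pcat Q2 p1 p2)"
    and l: "\<And>p. valid_path Q2 p \<Longrightarrow> plen (U p) = plen p"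
    using assms unfolding qiso_def by blast+
  have img: "{q. valid_path Q1 q} \<subseteq> U ` {p. valid_path Q2 p}" using sur by blast
  show A: "\<And>q. valid_path Q1 q \<Longrightarrow> U (qinv Q2 U q) = q \<and> valid_path Q2 (qinv Q2 U q)"
  proof -
    fix q assume "valid_path Q1 q"
    then have "q \<in> U ` {p. valid_path Q2 p}" using img by blast
    then show "U (qinv Q2 U q) = q \<and> valid_path Q2 (qinv Q2 U q)"
    proof -
      have "inv_into {p. valid_path Q2 p} U q \<in> {p. valid_path Q2 p}" by (rule inv_into_into) fact
      then show ?thesis unfolding qinv_def using f_inv_into_f[of q U] \<open>q \<in> U ` {p. valid_path Q2 p}\<close> by simp
    qed
  qed
  show B: "\<And>p. valid_path Q2 p \<Longrightarrow> qinv Q2 U (U p) = p"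
    unfolding qinv_def using inv_into_f_f[OF inj] by blast
  show "qiso Q2 Q1 (qinv Q2 U)"
    unfolding qiso_def
  proof (intro conjI allI impI)
    show "\<And>q. valid_path Q1 q \<Longrightarrow> valid_path Q2 (qinv Q2 U q)" using A by blast
    show "inj_on (qinv Q2 U) {p. valid_path Q1 p}"
    proof (rule inj_onI)
      fix q1 q2 assume "q1 \<in> {p. valid_path Q1 p}" "q2 \<in> {p. valid_path Q1 p}" "qinv Q2 U q1 = qinv Q2 U q2"
      then have "U (qinv Q2 U q1) = q1" "U (qinv Q2 U q2) = q2" "qinv Q2 U q1 = qinv Q2 U q2" using A by blast+
      then show "q1 = q2" by metis
    qed
    show "\<And>p. valid_path Q2 p \<Longrightarrow> \<exists>q. valid_path Q1 q \<and> qinv Q2 U q = p"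
      using B v by blast
    show "plen (qinv Q2 U q) = plen q" if "valid_path Q1 q" for q
      using A[OF that] l by metis
    fix q1 q2 assume q: "valid_path Q1 q1" "valid_path Q1 q2"
    obtain p1 p2 where p: "valid_path Q2 p1" "valid_path Q2 p2" "U p1 = q1" "U p2 = q2" using q sur by metis
    have i: "qinv Q2 U q1 = p1" "qinv Q2 U q2 = p2" using B p by blast+
    show "pcat Q2 (qinv Q2 U q1) (qinv Q2 U q2) = map_option (qinv Q2 U) (pcat Q1 q1 q2)"
    proof (cases "pcat Q2 p1 p2")
      case None then show ?thesis using c[OF p(1,2)] p i by simp
    next
      case (Some r)
      then have "valid_path Q2 r" using valid_pcat p by blast
      then show ?thesis using c[OF p(1,2)] p i Some B by simp
    qed
  qed
qed

lemma tr_PA: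
  assumes "qiso Q1 Q2 U" "x \<in> path_algebra Q1"
  shows "tr Q2 U x \<in> path_algebra Q2"
proof -
  have inj: "inj_on U {p. valid_path Q2 p}" using assms unfolding qiso_def by blast
  let ?B = "{p. valid_path Q2 p \<and> x (U p) \<noteq> 0}"
  have "U ` ?B \<subseteq> {p. x p \<noteq> 0}" by auto
  moreover have "finite {p. x p \<noteq> 0}" using assms by (simp add: path_algebra_def)
  ultimately have "finite (U ` ?B)" by (rule finite_subset)
  moreover have "inj_on U ?B" using inj by (rule inj_on_subset) auto
  ultimately have "finite ?B" using finite_imageD by blast
  moreover have "{p. tr Q2 U x p \<noteq> 0} = ?B" by (auto simp: tr_def)
  ultimately show ?thesis by (auto simp: path_algebra_def tr_def)
qed

lemma tr_padd: "tr Q2 U (padd x y) = padd (tr Q2 U x) (tr Q2 U y)"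
  by (auto simp: tr_def padd_def)
lemma tr_psmult: "tr Q2 U (psmult c x) = psmult c (tr Q2 U x)"
  by (auto simp: tr_def psmult_def)
lemma tr_pzero: "tr Q2 U pzero = pzero"
  by (auto simp: tr_def pzero_def)
lemma psub_self: "psub f f = pzero"
  by (auto simp: psub_def pzero_def)

lemma tr_pone: assumes "qiso Q1 Q2 U" shows "tr Q2 U (pone Q1) = pone Q2"
proof (rule ext)
  fix q
  have "valid_path Q2 q \<Longrightarrow> valid_path Q1 (U q) \<and> plen (U q) = plen q" using assms unfolding qiso_def by blast
  then show "tr Q2 U (pone Q1) q = pone Q2 q" unfolding tr_def pone_alt by simp
qed

lemma tr_pbasis: assumes "qiso Q1 Q2 U" "valid_path Q2 p" shows "tr Q2 U (pbasis (U p)) = pbasis p"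
proof (rule ext)
  fix q
  have inj: "inj_on U {p. valid_path Q2 p}" using assms unfolding qiso_def by blast
  have "valid_path Q2 q \<Longrightarrow> U q = U p \<longleftrightarrow> q = p" using inj assms(2) unfolding inj_on_def by blast
  then show "tr Q2 U (pbasis (U p)) q = pbasis p q" unfolding tr_def pbasis_def using assms(2) by auto
qed

lemma tr_pmult:
  assumes iso: "qiso Q1 Q2 U" and a: "a \<in> path_algebra Q1" and x: "x \<in> path_algebra Q1"
  shows "tr Q2 U (pmult Q1 a x) = pmult Q2 (tr Q2 U a) (tr Q2 U x)"
proof (rule ext)
  fix p
  have v: "\<And>p. valid_path Q2 p \<Longrightarrow> valid_path Q1 (U p)" and inj: "inj_on U {p. valid_path Q2 p}"
    and sur: "\<And>q. valid_path Q1 q \<Longrightarrow> \<exists>p. valid_path Q2 p \<and> U p = q"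
    and c: "\<And>p1 p2. valid_path Q2 p1 \<Longrightarrow> valid_path Q2 p2 \<Longrightarrow> pcat Q1 (U p1) (U p2) = map_option U (pcat Q2 p1 p2)"
    using iso unfolding qiso_def by blast+
  have av: "\<And>q. a q \<noteq> 0 \<Longrightarrow> valid_path Q1 q" and xv: "\<And>q. x q \<noteq> 0 \<Longrightarrow> valid_path Q1 q"
    using a x by (auto simp: path_algebra_def)
  let ?A2 = "{(p1, p2). tr Q2 U a p1 \<noteq> 0 \<and> tr Q2 U x p2 \<noteq> 0 \<and> pcat Q2 p1 p2 = Some p}"
  let ?A1 = "{(p1, p2). a p1 \<noteq> 0 \<and> x p2 \<noteq> 0 \<and> pcat Q1 p1 p2 = Some (U p)}"
  show "tr Q2 U (pmult Q1 a x) p = pmult Q2 (tr Q2 U a) (tr Q2 U x) p"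
  proof (cases "valid_path Q2 p")
    case False
    have "?A2 = {}"
    proof (rule ccontr)
      assume "?A2 \<noteq> {}"
      then obtain p1 p2 where h: "tr Q2 U a p1 \<noteq> 0" "tr Q2 U x p2 \<noteq> 0" "pcat Q2 p1 p2 = Some p" by auto
      then have "valid_path Q2 p1" "valid_path Q2 p2" by (auto simp: tr_def split: if_splits)
      then have "valid_path Q2 p" using valid_pcat h(3) by blast
      then show False using False by simp
    qed
    then show ?thesis using False by (simp only: pmult_def sum.empty tr_def) simp
  next
    case True
    have bij: "bij_betw (\<lambda>(p1, p2). (U p1, U p2)) ?A2 ?A1"
      unfolding bij_betw_def
    proof
      show "inj_on (\<lambda>(p1, p2). (U p1, U p2)) ?A2"
        using inj unfolding inj_on_def by (auto simp: tr_def split: if_splits)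
      show "(\<lambda>(p1, p2). (U p1, U p2)) ` ?A2 = ?A1"
      proof
        show "(\<lambda>(p1, p2). (U p1, U p2)) ` ?A2 \<subseteq> ?A1"
        proof clarify
          fix p1 p2 assume h: "tr Q2 U a p1 \<noteq> 0" "tr Q2 U x p2 \<noteq> 0" "pcat Q2 p1 p2 = Some p"
          then have "valid_path Q2 p1" "valid_path Q2 p2" by (auto simp: tr_def split: if_splits)
          then show "a (U p1) \<noteq> 0 \<and> x (U p2) \<noteq> 0 \<and> pcat Q1 (U p1) (U p2) = Some (U p)"
            using h c by (auto simp: tr_def)
        qed
        show "?A1 \<subseteq> (\<lambda>(p1, p2). (U p1, U p2)) ` ?A2"
        proof clarify
          fix q1 q2 assume h: "a q1 \<noteq> 0" "x q2 \<noteq> 0" "pcat Q1 q1 q2 = Some (U p)"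
          obtain p1 p2 where p: "valid_path Q2 p1" "valid_path Q2 p2" "U p1 = q1" "U p2 = q2"
            using h av xv sur by metis
          have "map_option U (pcat Q2 p1 p2) = Some (U p)" using c[OF p(1,2)] h p by simp
          then obtain r where r: "pcat Q2 p1 p2 = Some r" "U r = U p" by blast
          have "valid_path Q2 r" using r valid_pcat p by blast
          then have "r = p" using inj True r unfolding inj_on_def by blast
          then have "(p1, p2) \<in> ?A2" using p h r by (auto simp: tr_def)
          moreover have "(q1, q2) = (\<lambda>(p1, p2). (U p1, U p2)) (p1, p2)" using p by simp
          ultimately show "(q1, q2) \<in> (\<lambda>(p1, p2). (U p1, U p2)) ` ?A2" by (rule rev_image_eqI)
        qed
      qed
    qed
    have "pmult Q2 (tr Q2 U a) (tr Q2 U x) p = (\<Sum>(p1, p2)\<in>?A2. tr Q2 U a p1 * tr Q2 U x p2)"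
      by (simp add: pmult_def)
    also have "\<dots> = (\<Sum>(p1, p2)\<in>?A2. a (U p1) * x (U p2))"
      by (rule sum.cong) (auto simp: tr_def split: if_splits)
    also have "\<dots> = (\<Sum>y\<in>?A2. (\<lambda>(q1, q2). a q1 * x q2) ((\<lambda>(p1, p2). (U p1, U p2)) y))"
      by (rule sum.cong) auto
    also have "\<dots> = (\<Sum>(q1, q2)\<in>?A1. a q1 * x q2)"
      by (rule sum.reindex_bij_betw[OF bij])
    also have "\<dots> = tr Q2 U (pmult Q1 a x) p" using True by (simp add: pmult_def tr_def)
    finally show ?thesis by simp
  qed
qed

lemma tr_ideal:
  assumes iso: "qiso Q1 Q2 U" and R1: "R1 \<subseteq> path_algebra Q1"
    and gens: "\<And>r. r \<in> R1 \<Longrightarrow> tr Q2 U r \<in> gen_ideal Q2 R2"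
  shows "x \<in> gen_ideal Q1 R1 \<Longrightarrow> tr Q2 U x \<in> gen_ideal Q2 R2"
proof (induction rule: gen_ideal.induct)
  case (gen r) then show ?case using gens by blast
next
  case zero then show ?case by (simp add: tr_pzero gen_ideal.zero)
next
  case (add x y) then show ?case by (simp add: tr_padd gen_ideal.add)
next
  case (lmult x a)
  have "x \<in> path_algebra Q1" using gen_ideal_PA[OF R1 lmult.hyps(1)] .
  then have "tr Q2 U (pmult Q1 a x) = pmult Q2 (tr Q2 U a) (tr Q2 U x)" using tr_pmult[OF iso] lmult.hyps(2) by blast
  moreover have "tr Q2 U a \<in> path_algebra Q2" using tr_PA[OF iso lmult.hyps(2)] .
  ultimately show ?case using lmult.IH gen_ideal.lmult by simp
next
  case (rmult x a)
  have "x \<in> path_algebra Q1" using gen_ideal_PA[OF R1 rmult.hyps(1)] .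
  then have "tr Q2 U (pmult Q1 x a) = pmult Q2 (tr Q2 U x) (tr Q2 U a)" using tr_pmult[OF iso] rmult.hyps(2) by blast
  moreover have "tr Q2 U a \<in> path_algebra Q2" using tr_PA[OF iso rmult.hyps(2)] .
  ultimately show ?case using rmult.IH gen_ideal.rmult by simp
qed

lemma tr_tr:
  assumes "\<And>q. valid_path QA q \<Longrightarrow> valid_path QB (V q) \<and> U (V q) = q" "x \<in> path_algebra QA"
  shows "tr QA V (tr QB U x) = x"
proof (rule ext)
  fix q show "tr QA V (tr QB U x) q = x q"
    using assms by (cases "valid_path QA q") (auto simp: tr_def path_algebra_def)
qed

lemma qiso_quot:
  fixes R1 :: "(('a,'b) qpath \<Rightarrow> 'k::field) set" and Q1 :: "('a,'b) quiver" and Q2 :: "('c,'d) quiver"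
  assumes iso: "qiso Q1 Q2 U" and R1: "R1 \<subseteq> path_algebra Q1" and R2: "R2 \<subseteq> path_algebra Q2"
    and g1: "\<And>r. r \<in> R1 \<Longrightarrow> tr Q2 U r \<in> gen_ideal Q2 R2"
    and g2: "\<And>r. r \<in> R2 \<Longrightarrow> tr Q1 (qinv Q2 U) r \<in> gen_ideal Q1 R1"
  shows "quot_alg_iso Q1 (gen_ideal Q1 R1) Q2 (gen_ideal Q2 R2)"
  unfolding quot_alg_iso_def
proof (intro exI[where x="tr Q2 U"] conjI ballI allI)
  have iso2: "qiso Q2 Q1 (qinv Q2 U)" using qiso_inv(1)[OF iso] .
  have inv1: "\<And>q. valid_path Q1 q \<Longrightarrow> U (qinv Q2 U q) = q \<and> valid_path Q2 (qinv Q2 U q)"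
    using qiso_inv(2)[OF iso] .
  have inv2: "\<And>p. valid_path Q2 p \<Longrightarrow> qinv Q2 U (U p) = p \<and> valid_path Q1 (U p)"
    using qiso_inv(3)[OF iso] iso unfolding qiso_def by blast
  have z: "pzero \<in> gen_ideal Q2 R2" by (rule gen_ideal.zero)
  fix x y :: "('a,'b) qpath \<Rightarrow> 'k"
  show "x \<in> path_algebra Q1 \<Longrightarrow> tr Q2 U x \<in> path_algebra Q2" using tr_PA[OF iso] by blast
  show "psub (tr Q2 U (padd x y)) (padd (tr Q2 U x) (tr Q2 U y)) \<in> gen_ideal Q2 R2"
    by (simp add: tr_padd psub_self z)
  fix c
  show "psub (tr Q2 U (psmult c x)) (psmult c (tr Q2 U x)) \<in> gen_ideal Q2 R2"
    by (simp add: tr_psmult psub_self z)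
  show "x \<in> path_algebra Q1 \<Longrightarrow> y \<in> path_algebra Q1 \<Longrightarrow>
    psub (tr Q2 U (pmult Q1 x y)) (pmult Q2 (tr Q2 U x) (tr Q2 U y)) \<in> gen_ideal Q2 R2"
    by (simp add: tr_pmult[OF iso] psub_self z)
  show "psub (tr Q2 U (pone Q1)) (pone Q2) \<in> gen_ideal Q2 R2"
    by (simp add: tr_pone[OF iso] psub_self z)
  show "x \<in> path_algebra Q1 \<Longrightarrow> (tr Q2 U x \<in> gen_ideal Q2 R2) = (x \<in> gen_ideal Q1 R1)"
  proof
    assume x: "x \<in> path_algebra Q1" "tr Q2 U x \<in> gen_ideal Q2 R2"
    have "tr Q1 (qinv Q2 U) (tr Q2 U x) \<in> gen_ideal Q1 R1"
      using tr_ideal[OF iso2 R2 g2 x(2)] .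
    then show "x \<in> gen_ideal Q1 R1" using tr_tr[where QA=Q1 and V="qinv Q2 U" and QB=Q2 and U=U and x=x] inv1 x(1) by simp
  next
    assume "x \<in> gen_ideal Q1 R1"
    then show "tr Q2 U x \<in> gen_ideal Q2 R2" using tr_ideal[OF iso R1 g1] by blast
  qed
next
  fix y :: "('c,'d) qpath \<Rightarrow> 'k"
  have iso2: "qiso Q2 Q1 (qinv Q2 U)" using qiso_inv(1)[OF iso] .
  have inv2: "\<And>p. valid_path Q2 p \<Longrightarrow> qinv Q2 U (U p) = p \<and> valid_path Q1 (U p)"
    using qiso_inv(3)[OF iso] iso unfolding qiso_def by blast
  have z: "pzero \<in> gen_ideal Q2 R2" by (rule gen_ideal.zero)
  show "y \<in> path_algebra Q2 \<Longrightarrow> \<exists>x\<in>path_algebra Q1. psub (tr Q2 U x) y \<in> gen_ideal Q2 R2"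
  proof -
    assume y: "y \<in> path_algebra Q2"
    have "tr Q2 U (tr Q1 (qinv Q2 U) y) = y" using tr_tr[where QA=Q2 and V=U and QB=Q1 and U="qinv Q2 U" and x=y] inv2 y by simp
    then show ?thesis using tr_PA[OF iso2 y] by (metis psub_self z)
  qed
qed



lemma count_card: "count_list xs s = card {i. i < length xs \<and> xs ! i = s}"
  by (simp add: count_list_eq_length_filter length_filter_conv_card eq_commute)

lemma bg_facts:
  assumes "brauer_graph V E ord m"
  shows "finite V" "finite E" "E \<noteq> {}" "\<And>\<alpha>. \<alpha> \<in> V \<Longrightarrow> set (ord \<alpha>) \<subseteq> E"
    "\<And>s. s \<in> E \<Longrightarrow> (\<Sum>\<alpha>\<in>V. count_list (ord \<alpha>) s) = 2"
    "\<And>\<alpha> \<beta>. \<alpha> \<in> V \<Longrightarrow> \<beta> \<in> V \<Longrightarrow> (\<alpha>, \<beta>) \<in> (bg_adj V ord)\<^sup>*"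
    "\<And>\<alpha>. \<alpha> \<in> V \<Longrightarrow> m \<alpha> > 0"
  using assms unfolding brauer_graph_def by blast+

lemma occ_card:
  assumes bg: "brauer_graph V E ord m" and s: "s \<in> E"
  shows "card {h \<in> halfedges V ord. hedge ord h = s} = 2"
proof -
  have eq: "{h \<in> halfedges V ord. hedge ord h = s} = (SIGMA \<alpha>:V. {i. i < length (ord \<alpha>) \<and> ord \<alpha> ! i = s})"
    by (auto simp: halfedges_def hedge_def)
  have "card (SIGMA \<alpha>:V. {i. i < length (ord \<alpha>) \<and> ord \<alpha> ! i = s}) = (\<Sum>\<alpha>\<in>V. count_list (ord \<alpha>) s)"
    using bg_facts(1)[OF bg] by (simp add: count_card)
  then show ?thesis using eq bg_facts(5)[OF bg s] by simp
qed

lemma two_halfedges: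
  assumes bg: "brauer_graph V E ord m" and s: "s \<in> E"
  obtains h1 h2 where "h1 \<in> halfedges V ord" "h2 \<in> halfedges V ord" "h1 \<noteq> h2"
    "hedge ord h1 = s" "hedge ord h2 = s"
proof -
  from occ_card[OF bg s] obtain x y where "{h \<in> halfedges V ord. hedge ord h = s} = {x, y}" "x \<noteq> y"
    unfolding card_2_iff by blast
  then show ?thesis using that by blast
qed

lemma three_contra:
  assumes bg: "brauer_graph V E ord m" and s: "s \<in> E"
    and V: "\<alpha> \<in> V" "\<beta> \<in> V" "\<gamma> \<in> V" and d: "\<alpha> \<noteq> \<beta>" "\<alpha> \<noteq> \<gamma>" "\<beta> \<noteq> \<gamma>"
    and i: "s \<in> set (ord \<alpha>)" "s \<in> set (ord \<beta>)" "s \<in> set (ord \<gamma>)"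
  shows False
proof -
  have "(\<Sum>x\<in>{\<alpha>,\<beta>,\<gamma>}. count_list (ord x) s) \<le> (\<Sum>x\<in>V. count_list (ord x) s)"
    using V bg_facts(1)[OF bg] by (intro sum_mono2) auto
  moreover have "(\<Sum>x\<in>{\<alpha>,\<beta>,\<gamma>}. count_list (ord x) s) = count_list (ord \<alpha>) s + count_list (ord \<beta>) s + count_list (ord \<gamma>) s"
    using d by simp
  moreover have "count_list (ord \<alpha>) s \<ge> 1" "count_list (ord \<beta>) s \<ge> 1" "count_list (ord \<gamma>) s \<ge> 1"
    using i count_list_0_iff by (metis less_one not_le)+
  ultimately show False using bg_facts(5)[OF bg s] by linarith
qed

lemma two_count1:
  assumes bg: "brauer_graph V E ord m" and s: "s \<in> E"
    and V: "\<alpha> \<in> V" "\<beta> \<in> V" and d: "\<alpha> \<noteq> \<beta>"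
    and i: "s \<in> set (ord \<alpha>)" "s \<in> set (ord \<beta>)"
  shows "count_list (ord \<alpha>) s = 1"
proof -
  have "(\<Sum>x\<in>{\<alpha>,\<beta>}. count_list (ord x) s) \<le> (\<Sum>x\<in>V. count_list (ord x) s)"
    using V bg_facts(1)[OF bg] by (intro sum_mono2) auto
  moreover have "(\<Sum>x\<in>{\<alpha>,\<beta>}. count_list (ord x) s) = count_list (ord \<alpha>) s + count_list (ord \<beta>) s"
    using d by simp
  moreover have "count_list (ord \<alpha>) s \<ge> 1" "count_list (ord \<beta>) s \<ge> 1"
    using i count_list_0_iff by (metis less_one not_le)+
  ultimately show ?thesis using bg_facts(5)[OF bg s] by linarith
qed

lemma other_end:
  assumes bg: "brauer_graph V E ord m" and s: "s \<in> E"
    and l: "l0 \<in> V" "ord l0 = [s]"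
  obtains \<gamma> where "\<gamma> \<in> V" "\<gamma> \<noteq> l0" "s \<in> set (ord \<gamma>)"
proof -
  have fin: "finite V" using bg_facts(1)[OF bg] .
  have "(\<Sum>x\<in>V. count_list (ord x) s) = count_list (ord l0) s + (\<Sum>x\<in>V - {l0}. count_list (ord x) s)"
    using sum.remove[OF fin l(1)] by simp
  then have "(\<Sum>x\<in>V - {l0}. count_list (ord x) s) = 1" using bg_facts(5)[OF bg s] l by simp
  then obtain \<gamma> where "\<gamma> \<in> V - {l0}" "count_list (ord \<gamma>) s \<noteq> 0"
    by (metis one_neq_zero sum.neutral)
  then show ?thesis using that count_list_0_iff by (metis DiffD1 DiffD2 singletonI)
qed

lemma some_end:
  assumes bg: "brauer_graph V E ord m" and s: "s \<in> E"
  obtains \<alpha> where "\<alpha> \<in> V" "s \<in> set (ord \<alpha>)"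
proof -
  have "(\<Sum>x\<in>V. count_list (ord x) s) = 2" using bg_facts(5)[OF bg s] .
  then obtain \<alpha> where "\<alpha> \<in> V" "count_list (ord \<alpha>) s \<noteq> 0"
    by (metis zero_neq_numeral sum.neutral)
  then show ?thesis using that count_list_0_iff by metis
qed

lemma closed_set:
  assumes bg: "brauer_graph V E ord m" and c: "c \<in> V" "c \<in> W"
    and cl: "\<And>\<alpha> \<beta> t. \<alpha> \<in> W \<Longrightarrow> \<alpha> \<in> V \<Longrightarrow> \<beta> \<in> V \<Longrightarrow> t \<in> set (ord \<alpha>) \<Longrightarrow> t \<in> set (ord \<beta>) \<Longrightarrow> \<beta> \<in> W"
  shows "V \<subseteq> W"
proof
  fix \<beta> assume b: "\<beta> \<in> V"
  have "(c, \<beta>) \<in> (bg_adj V ord)\<^sup>*" using bg_facts(6)[OF bg c(1) b] .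
  then show "\<beta> \<in> W"
  proof (induction rule: rtrancl_induct)
    case base then show ?case using c by simp
  next
    case (step y z)
    then show ?case using cl unfolding bg_adj_def by blast
  qed
qed

lemma bcycle_nth:
  "k < length (ord (fst h)) \<Longrightarrow> bcycle ord h ! k = (fst h, (snd h + k) mod length (ord (fst h)))"
  by (simp add: bcycle_def)

lemma bcycle_len: "length (bcycle ord h) = length (ord (fst h))"
  by (simp add: bcycle_def)

lemma bcycle_sub:
  assumes "bcycle ord h = u @ [a, b] @ w"
  shows "fst a = fst h \<and> fst b = fst h \<and> b = hsucc ord a"
proof -
  let ?L = "length (ord (fst h))"
  let ?k = "length u"
  have len: "Suc ?k < ?L" using arg_cong[OF assms, of length] bcycle_len[of ord h] by simp
  have a: "a = bcycle ord h ! ?k" using assms by simp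
  have b: "b = bcycle ord h ! Suc ?k" using assms by (simp add: nth_append)
  have a': "a = (fst h, (snd h + ?k) mod ?L)" using a bcycle_nth[of ?k ord h] len by simp
  have b': "b = (fst h, (snd h + Suc ?k) mod ?L)" using b bcycle_nth[of "Suc ?k" ord h] len by simp
  have "hsucc ord a = (fst h, Suc ((snd h + ?k) mod ?L) mod ?L)" using a' by (simp add: hsucc_def)
  also have "\<dots> = (fst h, (snd h + Suc ?k) mod ?L)" by (simp add: mod_Suc_eq)
  finally show ?thesis using a' b' by simp
qed

lemma bgq: "\<not> is_A2_11 V E ord m \<Longrightarrow> bg_quiver V E ord m =
   \<lparr>qverts = E, qarrs = {h \<in> halfedges V ord. \<not> truncated_at ord m (hedge ord h) (fst h)},
    qsrc = hedge ord, qtgt = (\<lambda>h. hedge ord (hsucc ord h))\<rparr>"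
  by (simp add: bg_quiver_def)



lemma trunc_of_no3:
  assumes bg: "brauer_graph V E ord m" and nA: "\<not> is_A2_11 V E ord m"
    and no3: "bg_rel_three V E ord m = ({} :: (('e, 'v \<times> nat) qpath \<Rightarrow> 'k::field) set)"
    and s: "s \<in> E"
  shows "truncated_edge V ord m s"
proof (rule ccontr)
  assume nt: "\<not> truncated_edge V ord m s"
  obtain h1 h2 where h: "h1 \<in> halfedges V ord" "h2 \<in> halfedges V ord" "h1 \<noteq> h2"
    "hedge ord h1 = s" "hedge ord h2 = s" using two_halfedges[OF bg s] by blast
  obtain \<alpha> i where h1: "h1 = (\<alpha>, i)" by (cases h1)
  obtain \<beta> j where h2: "h2 = (\<beta>, j)" by (cases h2)
  have hv: "\<alpha> \<in> V" "i < length (ord \<alpha>)" "\<beta> \<in> V" "j < length (ord \<beta>)"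
    using h h1 h2 by (auto simp: halfedges_def)
  have si: "ord \<alpha> ! i = s" "ord \<beta> ! j = s" using h h1 h2 by (auto simp: hedge_def)
  have ta: "\<not> truncated_at ord m s \<alpha>" using nt hv si unfolding truncated_edge_def
    by (metis nth_mem)
  have tb: "\<not> truncated_at ord m s \<beta>" using nt hv si unfolding truncated_edge_def
    by (metis nth_mem)
  define L where "L = length (ord \<alpha>)"
  have L0: "L > 0" using hv(2) unfolding L_def by linarith
  define a where "a = (\<alpha>, (i + L - 1) mod L)"
  have ha: "hsucc ord a = h1"
  proof -
    have "Suc ((i + L - 1) mod L) mod L = Suc (i + L - 1) mod L" by (simp add: mod_Suc_eq)
    also have "\<dots> = (i + L) mod L" using L0 by simp
    also have "\<dots> = i" using hv L_def by simp
    finally show ?thesis unfolding a_def hsucc_def h1 L_def by simp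
  qed
  have a_he: "a \<in> halfedges V ord" using hv L0 unfolding a_def halfedges_def L_def by simp
  have a_nt: "\<not> truncated_at ord m (hedge ord a) (fst a)"
  proof
    assume t: "truncated_at ord m (hedge ord a) (fst a)"
    then have "L = 1" unfolding truncated_at_def a_def L_def by simp
    then have "a = h1" using hv L_def unfolding a_def h1 by simp
    then show False using t ta h h1 by simp
  qed
  let ?Q = "bg_quiver V E ord m"
  have Q: "?Q = \<lparr>qverts = E, qarrs = {h \<in> halfedges V ord. \<not> truncated_at ord m (hedge ord h) (fst h)},
    qsrc = hedge ord, qtgt = (\<lambda>h. hedge ord (hsucc ord h))\<rparr>" using bgq[OF nA] .
  have aQ: "a \<in> qarrs ?Q" using a_he a_nt Q by simp
  have bQ: "h2 \<in> qarrs ?Q" using h tb h2 Q by simp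
  have tgt: "qtgt ?Q a = qsrc ?Q h2" using Q ha h by simp
  have nsub: "\<not> (\<exists>h \<in> qarrs ?Q. \<exists>u w. bcycle ord h = u @ [a, h2] @ w)"
  proof
    assume "\<exists>h \<in> qarrs ?Q. \<exists>u w. bcycle ord h = u @ [a, h2] @ w"
    then obtain hh u w where "bcycle ord hh = u @ [a, h2] @ w" by blast
    then have "h2 = hsucc ord a" using bcycle_sub by blast
    then show False using ha h by simp
  qed
  have nl: "\<not> (a = h2 \<and> length (ord (fst a)) = 1)"
  proof
    assume "a = h2 \<and> length (ord (fst a)) = 1"
    then have "a = h2" "L = 1" unfolding a_def L_def by auto
    then have "a = h1" using hv L_def unfolding a_def h1 by simp
    then show False using \<open>a = h2\<close> h by simp
  qed
  have "pbasis (Arrs [a, h2]) \<in> (bg_rel_three V E ord m :: (('e, 'v \<times> nat) qpath \<Rightarrow> 'k) set)"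
    unfolding bg_rel_three_def Let_def using aQ bQ tgt nsub nl by blast
  then show False using no3 by simp
qed

lemma star_of_trunc:
  assumes bg: "brauer_graph V E ord m" and nA: "\<not> is_A2_11 V E ord m"
    and tr: "\<And>s. s \<in> E \<Longrightarrow> truncated_edge V ord m s"
  shows "\<exists>c. is_star V E ord c (card E) \<and> (\<forall>\<alpha>\<in>V - {c}. m \<alpha> = 1)"
proof -
  have fE: "finite E" and fV: "finite V" and sub: "\<And>\<alpha>. \<alpha> \<in> V \<Longrightarrow> set (ord \<alpha>) \<subseteq> E"
    using bg_facts[OF bg] by auto
  have trl: "\<exists>l\<in>V. ord l = [s] \<and> m l = 1" if "s \<in> E" for s
    using tr[OF that] unfolding truncated_edge_def truncated_at_def by blast
  obtain s0 where s0: "s0 \<in> E" using bg_facts(3)[OF bg] by blast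
  obtain l0 where l0: "l0 \<in> V" "ord l0 = [s0]" "m l0 = 1" using trl[OF s0] by blast
  obtain c where c: "c \<in> V" "c \<noteq> l0" "s0 \<in> set (ord c)" using other_end[OF bg s0 l0(1,2)] by blast
  have cnt: "\<not> (ord c = [s0] \<and> m c = 1)"
  proof
    assume cc: "ord c = [s0] \<and> m c = 1"
    have "V \<subseteq> {l0, c}"
    proof (rule closed_set[OF bg l0(1)])
      show "l0 \<in> {l0, c}" by simp
      fix \<alpha> \<beta> t assume a: "\<alpha> \<in> {l0, c}" "\<alpha> \<in> V" "\<beta> \<in> V" "t \<in> set (ord \<alpha>)" "t \<in> set (ord \<beta>)"
      then have "t = s0" using l0 cc by auto
      then show "\<beta> \<in> {l0, c}" using three_contra[OF bg s0 l0(1) c(1) a(3)] c l0 cc a by auto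
    qed
    then have V: "V = {l0, c}" using l0 c by auto
    have "E = {s0}"
    proof
      show "E \<subseteq> {s0}"
      proof
        fix t assume t: "t \<in> E"
        obtain \<alpha> where "\<alpha> \<in> V" "t \<in> set (ord \<alpha>)" using some_end[OF bg t] by blast
        then show "t \<in> {s0}" using V l0 cc by auto
      qed
    qed (use s0 in simp)
    then have "is_A2_11 V E ord m" unfolding is_A2_11_def using V c l0 cc by blast
    then show False using nA by simp
  qed
  have F: "\<exists>l\<in>V. l \<noteq> c \<and> ord l = [s] \<and> m l = 1" if s: "s \<in> E" for s
  proof -
    obtain l where l: "l \<in> V" "ord l = [s]" "m l = 1" using trl[OF s] by blast
    have "l \<noteq> c"
    proof
      assume "l = c"
      then have "s = s0" using l c by simp
      then show False using cnt l \<open>l = c\<close> by simp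
    qed
    then show ?thesis using l by blast
  qed
  define W where "W = {c} \<union> {\<alpha> \<in> V. \<exists>t. ord \<alpha> = [t] \<and> m \<alpha> = 1 \<and> t \<in> set (ord c)}"
  have VW: "V \<subseteq> W"
  proof (rule closed_set[OF bg c(1)])
    show "c \<in> W" by (simp add: W_def)
    fix \<alpha> \<beta> t assume a: "\<alpha> \<in> W" "\<alpha> \<in> V" "\<beta> \<in> V" "t \<in> set (ord \<alpha>)" "t \<in> set (ord \<beta>)"
    show "\<beta> \<in> W"
    proof (cases "\<alpha> = c")
      case True
      have tE: "t \<in> E" using sub a by blast
      obtain l where l: "l \<in> V" "l \<noteq> c" "ord l = [t]" "m l = 1" using F[OF tE] by blast
      show ?thesis
      proof (cases "\<beta> = c \<or> \<beta> = l")
        case True then show ?thesis using l a \<open>\<alpha> = c\<close> by (auto simp: W_def)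
      next
        case False
        then show ?thesis using three_contra[OF bg tE c(1) l(1) a(3)] l a \<open>\<alpha> = c\<close> by auto
      qed
    next
      case False
      then obtain t' where t': "ord \<alpha> = [t']" "t' \<in> set (ord c)" using a by (auto simp: W_def)
      have tt: "t = t'" using t' a by simp
      have tE: "t \<in> E" using sub a by blast
      show ?thesis
      proof (cases "\<beta> = c \<or> \<beta> = \<alpha>")
        case True then show ?thesis using a by (auto simp: W_def)
      next
        case False
        then show ?thesis using three_contra[OF bg tE c(1) a(2) a(3)] a t' tt \<open>\<alpha> \<noteq> c\<close> by auto
      qed
    qed
  qed
  have G: "s \<in> set (ord c)" if s: "s \<in> E" for s
  proof -
    obtain l where l: "l \<in> V" "l \<noteq> c" "ord l = [s]" "m l = 1" using F[OF s] by blast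
    obtain \<gamma> where g: "\<gamma> \<in> V" "\<gamma> \<noteq> l" "s \<in> set (ord \<gamma>)" using other_end[OF bg s l(1,3)] by blast
    show ?thesis using VW g by (auto simp: W_def)
  qed
  have cnt1: "count_list (ord c) s = 1" if s: "s \<in> E" for s
  proof -
    obtain l where l: "l \<in> V" "l \<noteq> c" "ord l = [s]" "m l = 1" using F[OF s] by blast
    show ?thesis using two_count1[OF bg s c(1) l(1)] l G[OF s] by simp
  qed
  have leaf: "\<exists>t. ord \<alpha> = [t] \<and> m \<alpha> = 1 \<and> t \<in> set (ord c)" if "\<alpha> \<in> V - {c}" for \<alpha>
    using VW that by (auto simp: W_def)
  have bij: "bij_betw (\<lambda>\<alpha>. hd (ord \<alpha>)) (V - {c}) E"
    unfolding bij_betw_def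
  proof
    show "inj_on (\<lambda>\<alpha>. hd (ord \<alpha>)) (V - {c})"
    proof (rule inj_onI)
      fix \<alpha> \<beta> assume a: "\<alpha> \<in> V - {c}" "\<beta> \<in> V - {c}" "hd (ord \<alpha>) = hd (ord \<beta>)"
      obtain t where t: "ord \<alpha> = [t]" "t \<in> set (ord c)" using leaf[OF a(1)] by blast
      obtain t' where t': "ord \<beta> = [t']" using leaf[OF a(2)] by blast
      have "t = t'" using t t' a by simp
      have tE: "t \<in> E" using sub c t by blast
      show "\<alpha> = \<beta>"
      proof (rule ccontr)
        assume "\<alpha> \<noteq> \<beta>"
        then show False using three_contra[OF bg tE c(1), of \<alpha> \<beta>] a t t' \<open>t = t'\<close> by auto
      qed
    qed
    show "(\<lambda>\<alpha>. hd (ord \<alpha>)) ` (V - {c}) = E"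
    proof
      show "(\<lambda>\<alpha>. hd (ord \<alpha>)) ` (V - {c}) \<subseteq> E"
      proof
        fix x assume "x \<in> (\<lambda>\<alpha>. hd (ord \<alpha>)) ` (V - {c})"
        then obtain \<alpha> where a: "\<alpha> \<in> V - {c}" "x = hd (ord \<alpha>)" by blast
        obtain t where "ord \<alpha> = [t]" using leaf[OF a(1)] by blast
        then show "x \<in> E" using sub[of \<alpha>] a by auto
      qed
      show "E \<subseteq> (\<lambda>\<alpha>. hd (ord \<alpha>)) ` (V - {c})"
      proof
        fix s assume s: "s \<in> E"
        obtain l where l: "l \<in> V" "l \<noteq> c" "ord l = [s]" "m l = 1" using F[OF s] by blast
        then show "s \<in> (\<lambda>\<alpha>. hd (ord \<alpha>)) ` (V - {c})" by (intro image_eqI[of _ _ l]) auto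
      qed
    qed
  qed
  have "card (V - {c}) = card E" using bij_betw_same_card[OF bij] .
  then have cV: "card V = card E + 1" using c(1) fV
    by (metis Suc_eq_plus1 card_Suc_Diff1)
  have "is_star V E ord c (card E)"
    unfolding is_star_def using c(1) cV cnt1 leaf by fastforce
  moreover have "\<forall>\<alpha>\<in>V - {c}. m \<alpha> = 1" using leaf by blast
  ultimately show ?thesis by blast
qed



lemma distinct_of_count: "(\<And>x. x \<in> set xs \<Longrightarrow> count_list xs x = 1) \<Longrightarrow> distinct xs"
proof (induction xs)
  case Nil then show ?case by simp
next
  case (Cons a xs)
  have "count_list (a # xs) a = 1" using Cons.prems[of a] by simp
  then have na: "a \<notin> set xs" by (simp add: count_list_0_iff)
  have "\<And>x. x \<in> set xs \<Longrightarrow> count_list xs x = 1"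
  proof -
    fix x assume x: "x \<in> set xs"
    then have "x \<noteq> a" using na by auto
    then show "count_list xs x = 1" using Cons.prems[of x] x by simp
  qed
  then show ?case using Cons.IH na by simp
qed

lemma concat_rep_nth: "k < M * length xs \<Longrightarrow> concat (replicate M xs) ! k = xs ! (k mod length xs)"
proof (induction M arbitrary: k)
  case 0 then show ?case by simp
next
  case (Suc M)
  show ?case
  proof (cases "k < length xs")
    case True then show ?thesis by (simp add: nth_append)
  next
    case False
    then have "k - length xs < M * length xs" using Suc.prems by simp
    then have "concat (replicate M xs) ! (k - length xs) = xs ! ((k - length xs) mod length xs)"
      using Suc.IH by blast
    moreover have "(k - length xs) mod length xs = k mod length xs" using False
      by (simp add: le_mod_geq)
    ultimately show ?thesis using False by (simp add: nth_append)
  qed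
qed

locale starctx =
  fixes V :: "'v set" and E :: "'e set" and ord :: "'v \<Rightarrow> 'e list" and m :: "'v \<Rightarrow> nat"
    and c :: 'v and n :: nat
  assumes bg: "brauer_graph V E ord m" and st: "is_star V E ord c n" and n1: "n \<ge> 1"
    and leafm: "\<forall>\<alpha>\<in>V - {c}. m \<alpha> = 1" and mc: "m c * n \<ge> 2"
begin

abbreviation "Q \<equiv> bg_quiver V E ord m"
definition "P i = bcycle_pow ord m (c, i) @ [(c, i)]"

lemma cV: "c \<in> V" using st by (simp add: is_star_def)
lemma cnt: "s \<in> E \<Longrightarrow> count_list (ord c) s = 1" using st by (simp add: is_star_def)
lemma setc: "set (ord c) = E"
proof
  show "set (ord c) \<subseteq> E" using bg_facts(4)[OF bg cV] .
  show "E \<subseteq> set (ord c)"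
  proof
    fix s assume "s \<in> E"
    then have "count_list (ord c) s \<noteq> 0" using cnt by simp
    then show "s \<in> set (ord c)" using count_list_0_iff by metis
  qed
qed
lemma distc: "distinct (ord c)" using distinct_of_count cnt setc by blast
lemma lenc: "length (ord c) = n"
  using distinct_card[OF distc] setc st by (simp add: is_star_def)

lemma leaf_shape: "\<alpha> \<in> V - {c} \<Longrightarrow> \<exists>s. ord \<alpha> = [s] \<and> s \<in> E"
proof -
  assume a: "\<alpha> \<in> V - {c}"
  then have "length (ord \<alpha>) = 1" using st by (simp add: is_star_def)
  then obtain s where "ord \<alpha> = [s]" by (metis length_0_conv length_Suc_conv One_nat_def)
  moreover have "s \<in> E" using bg_facts(4)[OF bg, of \<alpha>] a calculation by auto
  ultimately show ?thesis by blast
qed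

lemma leaf_of: "s \<in> E \<Longrightarrow> \<exists>l\<in>V - {c}. ord l = [s]"
proof -
  assume s: "s \<in> E"
  have fin: "finite V" using bg_facts(1)[OF bg] .
  have "(\<Sum>x\<in>V. count_list (ord x) s) = count_list (ord c) s + (\<Sum>x\<in>V - {c}. count_list (ord x) s)"
    using sum.remove[OF fin cV] by simp
  then have "(\<Sum>x\<in>V - {c}. count_list (ord x) s) = 1" using bg_facts(5)[OF bg s] cnt[OF s] by simp
  then obtain \<gamma> where g: "\<gamma> \<in> V - {c}" "count_list (ord \<gamma>) s \<noteq> 0"
    by (metis one_neq_zero sum.neutral)
  then obtain t where "ord \<gamma> = [t]" using leaf_shape by blast
  then have "ord \<gamma> = [s]" using g by (auto split: if_splits)
  then show ?thesis using g by blast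
qed

lemma nA: "\<not> is_A2_11 V E ord m"
proof
  assume "is_A2_11 V E ord m"
  then obtain \<alpha> \<beta> s where h: "V = {\<alpha>, \<beta>}" "E = {s}" "m \<alpha> = 1" "m \<beta> = 1"
    unfolding is_A2_11_def by blast
  have "m c = 1" using h cV by auto
  moreover have "n = 1" using st h by (simp add: is_star_def)
  ultimately show False using mc by simp
qed

lemma Qeq: "Q = \<lparr>qverts = E, qarrs = {h \<in> halfedges V ord. \<not> truncated_at ord m (hedge ord h) (fst h)},
    qsrc = hedge ord, qtgt = (\<lambda>h. hedge ord (hsucc ord h))\<rparr>" using bgq[OF nA] .

lemma c_nt: "\<not> truncated_at ord m s c"
  using mc lenc unfolding truncated_at_def by auto

lemma arrs: "qarrs Q = {(c, i) | i. i < n}"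
proof
  show "qarrs Q \<subseteq> {(c, i) | i. i < n}"
  proof
    fix h assume h: "h \<in> qarrs Q"
    obtain \<alpha> i where hh: "h = (\<alpha>, i)" by (cases h)
    have he: "\<alpha> \<in> V" "i < length (ord \<alpha>)" "\<not> truncated_at ord m (hedge ord h) \<alpha>"
      using h hh Qeq by (auto simp: halfedges_def)
    show "h \<in> {(c, i) | i. i < n}"
    proof (cases "\<alpha> = c")
      case True then show ?thesis using hh he lenc by simp
    next
      case False
      then obtain s where s: "ord \<alpha> = [s]" using leaf_shape he by blast
      then have "i = 0" using he by simp
      then have "truncated_at ord m (hedge ord h) \<alpha>"
        using s leafm he False hh by (simp add: truncated_at_def hedge_def)
      then show ?thesis using he by simp
    qed
  qed
  show "{(c, i) | i. i < n} \<subseteq> qarrs Q"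
    using Qeq cV lenc c_nt by (auto simp: halfedges_def)
qed

lemma src: "qsrc Q = hedge ord" using Qeq by simp
lemma tgt: "qtgt Q = (\<lambda>h. hedge ord (hsucc ord h))" using Qeq by simp
lemma hedge_c: "hedge ord (c, i) = ord c ! i" by (simp add: hedge_def)
lemma hsucc_c: "hsucc ord (c, i) = (c, Suc i mod n)" by (simp add: hsucc_def lenc)
lemma verts: "qverts Q = E" using Qeq by simp

lemma idx_eq: "i < n \<Longrightarrow> j < n \<Longrightarrow> ord c ! i = ord c ! j \<longleftrightarrow> i = j"
  using distc lenc nth_eq_iff_index_eq by blast

lemma P_len: "length (P i) = m c * n + 1"
  by (simp add: P_def bcycle_pow_def length_concat sum_list_replicate bcycle_len lenc)

lemma P_nth: assumes "i < n" "k \<le> m c * n" shows "P i ! k = (c, (i + k) mod n)"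
proof (cases "k < m c * n")
  case True
  have n0: "n > 0" using n1 by simp
  have "P i ! k = concat (replicate (m c) (bcycle ord (c, i))) ! k"
    using True by (simp add: P_def bcycle_pow_def nth_append length_concat sum_list_replicate bcycle_len lenc)
  also have "\<dots> = bcycle ord (c, i) ! (k mod n)"
    using True by (simp add: concat_rep_nth bcycle_len lenc mult.commute)
  also have "\<dots> = (c, (i + k mod n) mod n)" using bcycle_nth[of "k mod n" ord "(c,i)"] n0 lenc by simp
  also have "\<dots> = (c, (i + k) mod n)" by (simp add: mod_add_right_eq)
  finally show ?thesis .
next
  case False
  then have k: "k = m c * n" using assms by simp
  have "P i ! k = (c, i)" using k by (simp add: P_def nth_append bcycle_pow_def length_concat sum_list_replicate bcycle_len lenc)
  also have "\<dots> = (c, (i + k) mod n)" using k assms by simp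
  finally show ?thesis .
qed

lemma P_valid: assumes i: "i < n" shows "valid_path Q (Arrs (P i))"
proof -
  have n0: "n > 0" using n1 by simp
  have ne: "P i \<noteq> []" by (simp add: P_def)
  have "set (P i) \<subseteq> qarrs Q"
  proof
    fix x assume "x \<in> set (P i)"
    then obtain k where k: "k < length (P i)" "P i ! k = x" by (metis in_set_conv_nth)
    then have "x = (c, (i + k) mod n)" using P_nth i P_len by simp
    then show "x \<in> qarrs Q" using arrs n0 by simp
  qed
  moreover have "\<forall>k. Suc k < length (P i) \<longrightarrow> qtgt Q (P i ! k) = qsrc Q (P i ! Suc k)"
  proof (intro allI impI)
    fix k assume k: "Suc k < length (P i)"
    have a: "P i ! k = (c, (i + k) mod n)" "P i ! Suc k = (c, (i + Suc k) mod n)"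
      using P_nth i P_len k by simp_all
    show "qtgt Q (P i ! k) = qsrc Q (P i ! Suc k)"
      unfolding a tgt src hsucc_c hedge_c by (simp add: mod_Suc_eq)
  qed
  ultimately show ?thesis using ne by simp
qed

lemma valid_P: assumes v: "valid_path Q (Arrs xs)" and l: "length xs = m c * n + 1"
  shows "\<exists>i<n. xs = P i"
proof -
  have ne: "xs \<noteq> []" and sx: "set xs \<subseteq> qarrs Q"
    and cons: "\<And>k. Suc k < length xs \<Longrightarrow> qtgt Q (xs ! k) = qsrc Q (xs ! Suc k)" using v by auto
  have el: "\<And>k. k < length xs \<Longrightarrow> fst (xs ! k) = c \<and> snd (xs ! k) < n"
  proof -
    fix k assume "k < length xs"
    then have "xs ! k \<in> qarrs Q" using sx nth_mem by blast
    then show "fst (xs ! k) = c \<and> snd (xs ! k) < n" using arrs by auto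
  qed
  define i where "i = snd (xs ! 0)"
  have i: "i < n" using el[of 0] ne i_def by simp
  have n0: "n > 0" using n1 by simp
  have X: "k < length xs \<Longrightarrow> xs ! k = (c, (i + k) mod n)" for k
  proof (induction k)
    case 0 then show ?case using el[of 0] i_def i by (metis add.right_neutral mod_less prod.collapse)
  next
    case (Suc k)
    then have IH: "xs ! k = (c, (i + k) mod n)" by simp
    have "qtgt Q (xs ! k) = qsrc Q (xs ! Suc k)" using cons Suc.prems by simp
    then have "ord c ! (Suc ((i + k) mod n) mod n) = ord c ! snd (xs ! Suc k)"
      using IH el[OF Suc.prems] unfolding tgt src
      by (metis hsucc_c hedge_c prod.collapse)
    then have "Suc ((i + k) mod n) mod n = snd (xs ! Suc k)"
      using idx_eq el[OF Suc.prems] n0 by simp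
    then have "snd (xs ! Suc k) = (i + Suc k) mod n" by (simp add: mod_Suc_eq)
    then show ?case using el[OF Suc.prems] by (metis prod.collapse)
  qed
  have "xs = P i"
  proof (rule nth_equalityI)
    show "length xs = length (P i)" using l P_len by simp
    fix k assume "k < length xs"
    then show "xs ! k = P i ! k" using X P_nth i l by simp
  qed
  then show ?thesis using i by blast
qed

lemma rels: "bg_relations V E ord m (q :: 'e \<Rightarrow> 'v \<Rightarrow> 'k::field) = {pbasis (Arrs (P i)) | i. i < n}"
proof -
  have allT: "truncated_edge V ord m s" if s: "s \<in> E" for s
  proof -
    obtain l where l: "l \<in> V - {c}" "ord l = [s]" using leaf_of[OF s] by blast
    then show ?thesis using leafm unfolding truncated_edge_def truncated_at_def by (intro bexI[of _ l]) auto
  qed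
  have one: "bg_rel_one V E ord m q = {}" unfolding bg_rel_one_def using allT by auto
  have three: "bg_rel_three V E ord m = ({} :: (('e, 'v \<times> nat) qpath \<Rightarrow> 'k) set)"
  proof -
    have "False" if a: "a \<in> qarrs Q" "b \<in> qarrs Q" "qtgt Q a = qsrc Q b"
      and ns: "\<not> (\<exists>h \<in> qarrs Q. \<exists>u w. bcycle ord h = u @ [a, b] @ w)"
      and nl: "\<not> (a = b \<and> length (ord (fst a)) = 1)" for a b
    proof -
      obtain i j where ij: "a = (c, i)" "b = (c, j)" "i < n" "j < n" using a arrs by auto
      have "ord c ! (Suc i mod n) = ord c ! j" using a(3) unfolding ij tgt src hsucc_c hedge_c .
      then have j: "j = Suc i mod n" using idx_eq ij n1 by simp
      show False
      proof (cases "n = 1")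
        case True then show ?thesis using nl ij j lenc by simp
      next
        case False
        then have n2: "n \<ge> 2" using n1 by simp
        let ?B = "bcycle ord (c, i)"
        have lB: "length ?B = n" by (simp add: bcycle_len lenc)
        have "?B = take 2 ?B @ drop 2 ?B" by simp
        moreover have "take 2 ?B = [?B ! 0, ?B ! 1]"
          using lB n2 by (metis One_nat_def Suc_1 Suc_le_lessD less_2_cases_iff take_Suc_conv_app_nth take_0 append.left_neutral append_Cons numeral_2_eq_2 lessI Suc_lessD)
        moreover have "?B ! 0 = a" using bcycle_nth[of 0 ord "(c,i)"] ij lenc by simp
        moreover have "?B ! 1 = b" using bcycle_nth[of 1 ord "(c,i)"] ij lenc n2 j by simp
        ultimately have "?B = [] @ [a, b] @ drop 2 ?B" by simp
        then show False using ns a(1) ij by blast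
      qed
    qed
    then show ?thesis unfolding bg_rel_three_def Let_def by blast
  qed
  have two: "(bg_rel_two V E ord m :: (('e, 'v \<times> nat) qpath \<Rightarrow> 'k) set) = {pbasis (Arrs (P i)) | i. i < n}"
  proof
    show "bg_rel_two V E ord m \<subseteq> {pbasis (Arrs (P i)) | i. i < n}"
    proof
      fix r assume "r \<in> bg_rel_two V E ord m"
      then obtain s h1 h2 where h: "r = pbasis (Arrs (bcycle_pow ord m h2 @ [h2]))" "s \<in> E"
        "h1 \<in> halfedges V ord" "h2 \<in> halfedges V ord" "h1 \<noteq> h2" "hedge ord h1 = s" "hedge ord h2 = s"
        "truncated_at ord m s (fst h1)" unfolding bg_rel_two_def by blast
      obtain \<alpha> i where h2: "h2 = (\<alpha>, i)" by (cases h2)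
      obtain \<beta> j where h1: "h1 = (\<beta>, j)" by (cases h1)
      have hv: "\<alpha> \<in> V" "i < length (ord \<alpha>)" "\<beta> \<in> V" "j < length (ord \<beta>)" using h h1 h2 by (auto simp: halfedges_def)
      have ob: "ord \<beta> = [s]" "j = 0" using h(8) h1 hv by (auto simp: truncated_at_def)
      have "\<alpha> = c"
      proof (rule ccontr)
        assume ac: "\<alpha> \<noteq> c"
        then obtain t where t: "ord \<alpha> = [t]" using leaf_shape hv by blast
        then have "i = 0" "t = s" using hv h(7) h2 by (auto simp: hedge_def)
        then have ab: "\<alpha> \<noteq> \<beta>" using h(5) h1 h2 ob by auto
        have bc: "\<beta> \<noteq> c" using h(8) h1 c_nt by auto
        show False using three_contra[OF bg h(2) hv(1) hv(3) cV ab ac bc] t \<open>t = s\<close> ob setc h(2) by simp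
      qed
      then have "i < n" using hv lenc by simp
      then show "r \<in> {pbasis (Arrs (P i)) | i. i < n}" using h(1) h2 \<open>\<alpha> = c\<close> by (auto simp: P_def)
    qed
    show "{pbasis (Arrs (P i)) | i. i < n} \<subseteq> (bg_rel_two V E ord m :: (('e, 'v \<times> nat) qpath \<Rightarrow> 'k) set)"
    proof
      fix r :: "('e, 'v \<times> nat) qpath \<Rightarrow> 'k" assume "r \<in> {pbasis (Arrs (P i)) | i. i < n}"
      then obtain i where i: "i < n" "r = pbasis (Arrs (P i))" by blast
      let ?s = "ord c ! i"
      have sE: "?s \<in> E" using setc lenc i by auto
      obtain l where l: "l \<in> V - {c}" "ord l = [?s]" using leaf_of[OF sE] by blast
      have hh: "(l, 0) \<in> halfedges V ord" "(c, i) \<in> halfedges V ord" "(l, 0) \<noteq> (c, i)"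
        "hedge ord (l, 0) = ?s" "hedge ord (c, i) = ?s" "truncated_at ord m ?s (fst (l, 0))"
        using l i lenc cV leafm by (auto simp: halfedges_def hedge_def truncated_at_def)
      have "pbasis (Arrs (P i)) \<in> (bg_rel_two V E ord m :: (('e, 'v \<times> nat) qpath \<Rightarrow> 'k) set)"
        unfolding bg_rel_two_def P_def mem_Collect_eq
        by (rule exI[of _ ?s], rule exI[of _ "(l,0)"], rule exI[of _ "(c,i)"]) (use hh sE in simp)
      then show "r \<in> bg_rel_two V E ord m" using i by simp
    qed
  qed
  show ?thesis unfolding bg_relations_def using nA one two three by simp
qed

end



context starctx
begin

definition Uf :: "(nat, nat) qpath \<Rightarrow> ('e, 'v \<times> nat) qpath" where
  "Uf p = (case p of Triv i \<Rightarrow> Triv (ord c ! i) | Arrs ys \<Rightarrow> Arrs (map (Pair c) ys))"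

lemma Uf_simps[simp]: "Uf (Triv i) = Triv (ord c ! i)" "Uf (Arrs ys) = Arrs (map (Pair c) ys)"
  by (simp_all add: Uf_def)

lemma cq: "qverts (cycle_quiver n) = {..<n}" "qarrs (cycle_quiver n) = {..<n}"
  "qsrc (cycle_quiver n) = id" "qtgt (cycle_quiver n) = (\<lambda>i. Suc i mod n)"
  by (simp_all add: cycle_quiver_def)

lemma n0: "n > 0" using n1 by simp

lemma ends:
  assumes "valid_path (cycle_quiver n) p"
  shows "pend Q (Uf p) = ord c ! pend (cycle_quiver n) p \<and> pend (cycle_quiver n) p < n \<and>
         pstart Q (Uf p) = ord c ! pstart (cycle_quiver n) p \<and> pstart (cycle_quiver n) p < n"
proof (cases p)
  case (Triv i) then show ?thesis using assms cq by simp
next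
  case (Arrs ys)
  then have ys: "ys \<noteq> []" "set ys \<subseteq> {..<n}" using assms cq by auto
  then have "hd ys < n" using hd_in_set by blast
  then show ?thesis using Arrs ys cq n0 by (simp add: last_map hd_map tgt src hsucc_c hedge_c)
qed

lemma qiso_U: "qiso Q (cycle_quiver n) Uf"
  unfolding qiso_def
proof (intro conjI allI impI)
  let ?C = "cycle_quiver n"
  show V1: "valid_path Q (Uf p)" if v: "valid_path ?C p" for p
  proof (cases p)
    case (Triv i)
    then show ?thesis using v cq verts setc lenc by auto
  next
    case (Arrs ys)
    then have ys: "ys \<noteq> []" "set ys \<subseteq> {..<n}" "\<And>k. Suc k < length ys \<Longrightarrow> Suc (ys ! k) mod n = ys ! Suc k"
      using v cq by auto
    have "set (map (Pair c) ys) \<subseteq> qarrs Q" using ys arrs by auto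
    moreover have "\<forall>k. Suc k < length (map (Pair c) ys) \<longrightarrow>
       qtgt Q (map (Pair c) ys ! k) = qsrc Q (map (Pair c) ys ! Suc k)"
      using ys(3) by (simp add: tgt src hsucc_c hedge_c)
    ultimately show ?thesis using Arrs ys by simp
  qed
  show "inj_on Uf {p. valid_path ?C p}"
  proof (rule inj_onI)
    fix p1 p2 assume a: "p1 \<in> {p. valid_path ?C p}" "p2 \<in> {p. valid_path ?C p}" "Uf p1 = Uf p2"
    show "p1 = p2"
    proof (cases p1)
      case (Triv i)
      then obtain j where "p2 = Triv j" using a by (cases p2) auto
      then show ?thesis using Triv a idx_eq cq by auto
    next
      case (Arrs xs)
      then obtain ys where "p2 = Arrs ys" using a by (cases p2) auto
      then have "map snd (map (Pair c) xs) = map snd (map (Pair c) ys)" using Arrs a by simp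
      then have "xs = ys" by (simp add: o_def)
      then show ?thesis using Arrs \<open>p2 = Arrs ys\<close> by simp
    qed
  qed
  show "\<exists>p. valid_path ?C p \<and> Uf p = q" if v: "valid_path Q q" for q
  proof (cases q)
    case (Triv s)
    then have "s \<in> E" using v verts by simp
    then obtain i where "i < n" "ord c ! i = s" using setc lenc by (metis in_set_conv_nth)
    then show ?thesis using Triv cq by (intro exI[of _ "Triv i"]) simp
  next
    case (Arrs xs)
    then have xs: "xs \<noteq> []" "set xs \<subseteq> qarrs Q"
      "\<And>k. Suc k < length xs \<Longrightarrow> qtgt Q (xs ! k) = qsrc Q (xs ! Suc k)" using v by auto
    have el: "\<And>x. x \<in> set xs \<Longrightarrow> x = (c, snd x) \<and> snd x < n" using xs(2) arrs by auto
    have eq: "map (Pair c) (map snd xs) = xs"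
    proof (rule nth_equalityI)
      show "length (map (Pair c) (map snd xs)) = length xs" by simp
      fix k assume "k < length (map (Pair c) (map snd xs))"
      then have "xs ! k \<in> set xs" by simp
      then show "map (Pair c) (map snd xs) ! k = xs ! k" using el \<open>k < _\<close> by (metis length_map nth_map)
    qed
    have "valid_path ?C (Arrs (map snd xs))"
    proof -
      have "set (map snd xs) \<subseteq> {..<n}" using el by auto
      moreover have "\<forall>k. Suc k < length (map snd xs) \<longrightarrow> Suc (map snd xs ! k) mod n = map snd xs ! Suc k"
      proof (intro allI impI)
        fix k assume k: "Suc k < length (map snd xs)"
        have m1: "xs ! k \<in> set xs" "xs ! Suc k \<in> set xs" using k by simp_all
        have "qtgt Q (xs ! k) = qsrc Q (xs ! Suc k)" using xs(3) k by simp
        then have "ord c ! (Suc (snd (xs ! k)) mod n) = ord c ! snd (xs ! Suc k)"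
          using el[OF m1(1)] el[OF m1(2)] unfolding tgt src by (metis hsucc_c hedge_c)
        then show "Suc (map snd xs ! k) mod n = map snd xs ! Suc k"
          using idx_eq el[OF m1(2)] n0 k by simp
      qed
      ultimately show ?thesis using xs cq by simp
    qed
    then show ?thesis using Arrs eq by (intro exI[of _ "Arrs (map snd xs)"]) simp
  qed
  show "pcat Q (Uf p1) (Uf p2) = map_option Uf (pcat ?C p1 p2)"
    if v: "valid_path ?C p1" "valid_path ?C p2" for p1 p2
  proof -
    have e1: "pend Q (Uf p1) = ord c ! pend ?C p1" "pend ?C p1 < n" using ends[OF v(1)] by auto
    have e2: "pstart Q (Uf p2) = ord c ! pstart ?C p2" "pstart ?C p2 < n" using ends[OF v(2)] by auto
    have cond: "pend Q (Uf p1) = pstart Q (Uf p2) \<longleftrightarrow> pend ?C p1 = pstart ?C p2"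
      using e1 e2 idx_eq by simp
    show ?thesis
      unfolding pcat_def cond
      by (cases p1; cases p2) auto
  qed
  show "plen (Uf p) = plen p" if "valid_path ?C p" for p
    by (cases p) auto
qed

lemma D_pos: "m c * n + 1 > 0" by simp

lemma bg_iso:
  "quot_alg_iso Q (bg_ideal V E ord m (q :: 'e \<Rightarrow> 'v \<Rightarrow> 'k::field))
     (cycle_quiver n) (paths_length_ideal n (m c * n + 1) :: ((nat, nat) qpath \<Rightarrow> 'k) set)"
proof -
  let ?C = "cycle_quiver n"
  let ?D = "m c * n + 1"
  let ?R1 = "bg_relations V E ord m q"
  let ?R2 = "{pbasis p | p. valid_path ?C p \<and> plen p = ?D} :: ((nat, nat) qpath \<Rightarrow> 'k) set"
  have iso: "qiso Q ?C Uf" by (rule qiso_U)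
  have iso2: "qiso ?C Q (qinv ?C Uf)" by (rule qiso_inv(1)[OF iso])
  have R1: "?R1 \<subseteq> path_algebra Q"
  proof
    fix x assume "x \<in> ?R1"
    then obtain i where "i < n" "x = pbasis (Arrs (P i))" using rels by blast
    then show "x \<in> path_algebra Q" using P_valid pbasis_PA by blast
  qed
  have R2: "?R2 \<subseteq> path_algebra ?C" using pbasis_PA by auto
  have g1: "tr ?C Uf r \<in> gen_ideal ?C ?R2" if r: "r \<in> ?R1" for r
  proof -
    obtain i where i: "i < n" "r = pbasis (Arrs (P i))" using r rels by blast
    obtain p where p: "valid_path ?C p" "Uf p = Arrs (P i)"
      using iso P_valid[OF i(1)] unfolding qiso_def by blast
    have "plen p = ?D" using p iso P_len unfolding qiso_def by (metis plen.simps(2))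
    then have "pbasis p \<in> ?R2" using p by blast
    moreover have "tr ?C Uf r = pbasis p" using tr_pbasis[OF iso p(1)] p i by simp
    ultimately show ?thesis by (simp add: gen_ideal.gen)
  qed
  have g2: "tr Q (qinv ?C Uf) r \<in> gen_ideal Q ?R1" if r: "r \<in> ?R2" for r
  proof -
    obtain p where p: "r = pbasis p" "valid_path ?C p" "plen p = ?D" using r by blast
    have vU: "valid_path Q (Uf p)" "plen (Uf p) = ?D" using iso p unfolding qiso_def by auto
    obtain xs where xs: "Uf p = Arrs xs" using vU by (cases "Uf p") auto
    obtain i where i: "i < n" "xs = P i" using valid_P[of xs] vU xs by auto
    have "qinv ?C Uf (Uf p) = p" using qiso_inv(3)[OF iso p(2)] .
    then have "tr Q (qinv ?C Uf) r = pbasis (Uf p)"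
      using tr_pbasis[OF iso2 vU(1)] p by simp
    moreover have "pbasis (Uf p) \<in> ?R1" using rels xs i by auto
    ultimately show ?thesis by (simp add: gen_ideal.gen)
  qed
  show ?thesis
    unfolding bg_ideal_def paths_length_ideal_def
    using qiso_quot[OF iso R1 R2 g1 g2] by simp
qed

lemma bg_dhom:
  "d_homogeneous Q (bg_ideal V E ord m (q :: 'e \<Rightarrow> 'v \<Rightarrow> 'k::field)) (m c * n + 1)"
  unfolding d_homogeneous_def
proof (intro exI[of _ "bg_relations V E ord m q"] conjI allI impI)
  let ?D = "m c * n + 1"
  let ?S = "bg_relations V E ord m q"
  show "?S \<subseteq> {f. homogeneous Q ?D f}"
  proof
    fix r assume "r \<in> ?S"
    then obtain i where i: "i < n" "r = pbasis (Arrs (P i))" using rels by blast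
    then show "r \<in> {f. homogeneous Q ?D f}"
      using pbasis_PA[OF P_valid[OF i(1)]] P_len by (auto simp: homogeneous_def pbasis_def)
  qed
  show "gen_ideal Q ?S = bg_ideal V E ord m q" by (simp add: bg_ideal_def)
  fix S' assume S': "S' \<subset> ?S"
  then obtain r0 where r0: "r0 \<in> ?S" "r0 \<notin> S'" by blast
  then obtain i0 where i0: "i0 < n" "r0 = pbasis (Arrs (P i0))" using rels by blast
  let ?p0 = "Arrs (P i0)"
  let ?Pp = "\<lambda>p. ?D \<le> plen p \<and> p \<noteq> ?p0"
  show "gen_ideal Q S' \<noteq> bg_ideal V E ord m q"
  proof
    assume eq: "gen_ideal Q S' = bg_ideal V E ord m q"
    have "r0 \<in> gen_ideal Q S'" using eq r0(1) unfolding bg_ideal_def by (simp add: gen_ideal.gen)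
    moreover have "r0 ?p0 \<noteq> 0" using i0 by (simp add: pbasis_def)
    moreover have A: "\<And>r p. r \<in> S' \<Longrightarrow> r p \<noteq> 0 \<Longrightarrow> ?Pp p"
    proof -
      fix r p assume r: "r \<in> S'" "r p \<noteq> 0"
      then have "r \<in> ?S" using S' by blast
      then obtain j where j: "j < n" "r = pbasis (Arrs (P j))" using rels by blast
      have "r \<noteq> r0" using r r0 by blast
      then have "Arrs (P j) \<noteq> ?p0" using j i0 by auto
      moreover have "p = Arrs (P j)" using r j by (simp add: pbasis_def split: if_splits)
      ultimately show "?Pp p" using P_len by simp
    qed
    moreover have B: "\<And>p1 p2 p. pcat Q p1 p2 = Some p \<Longrightarrow> ?Pp p2 \<Longrightarrow> ?Pp p"
    proof -
      fix p1 p2 p assume pc: "pcat Q p1 p2 = Some p" and h: "?Pp p2"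
      have l: "plen p = plen p1 + plen p2" using pcat_plen[OF pc] .
      show "?Pp p"
      proof (cases "plen p1 = 0")
        case True then show ?thesis using pcat_len0_left[OF pc True] h by simp
      next
        case False then show ?thesis using l h P_len by auto
      qed
    qed
    moreover have C: "\<And>p1 p2 p. pcat Q p1 p2 = Some p \<Longrightarrow> ?Pp p1 \<Longrightarrow> ?Pp p"
    proof -
      fix p1 p2 p assume pc: "pcat Q p1 p2 = Some p" and h: "?Pp p1"
      have l: "plen p = plen p1 + plen p2" using pcat_plen[OF pc] .
      show "?Pp p"
      proof (cases "plen p2 = 0")
        case True then show ?thesis using pcat_len0_right[OF pc True] h by simp
      next
        case False then show ?thesis using l h P_len by auto
      qed
    qed
    ultimately have "?Pp ?p0" using gen_ideal_supp[of S' ?Pp Q r0 ?p0] by blast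
    then show False by simp
  qed
qed

end



lemma count_all: "set xs \<subseteq> {s} \<Longrightarrow> count_list xs s = length xs"
  by (induction xs) auto

lemma star_A2:
  assumes bg: "brauer_graph V E ord m" and st: "is_star V E ord c 1" and mc: "m c = 1"
    and lm: "\<forall>\<alpha>\<in>V - {c}. m \<alpha> = 1"
  shows "is_A2_11 V E ord m"
proof -
  have c: "c \<in> V" "card V = 2" "card E = 1" and cnt: "\<And>s. s \<in> E \<Longrightarrow> count_list (ord c) s = 1"
    and len: "\<And>\<alpha>. \<alpha> \<in> V - {c} \<Longrightarrow> length (ord \<alpha>) = 1" using st by (auto simp: is_star_def)
  obtain s where E: "E = {s}" using card_1_singletonE[OF c(3)] by blast
  obtain x y where xy: "V = {x, y}" "x \<noteq> y" using c(2) unfolding card_2_iff by blast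
  obtain l where l: "V = {c, l}" "c \<noteq> l"
  proof (cases "c = x")
    case True then show ?thesis using that[of y] xy by simp
  next
    case False then have "c = y" using xy c(1) by simp
    then show ?thesis using that[of x] xy by (simp add: insert_commute)
  qed
  have oc: "set (ord c) \<subseteq> {s}" using bg_facts(4)[OF bg c(1)] E by simp
  have "length (ord c) = 1" using count_all[OF oc] cnt[of s] E by simp
  then have ocs: "ord c = [s]" using oc by (cases "ord c") auto
  have "length (ord l) = 1" using len l by simp
  moreover have "set (ord l) \<subseteq> {s}" using bg_facts(4)[OF bg, of l] E l by simp
  ultimately have ols: "ord l = [s]" by (cases "ord l") auto
  have "m l = 1" using lm l by simp
  then show ?thesis unfolding is_A2_11_def using l E ocs ols mc by blast
qed

lemma supp_ge:
  assumes "\<And>r p. r \<in> R \<Longrightarrow> r p \<noteq> 0 \<Longrightarrow> L \<le> plen p" "x \<in> gen_ideal Q R" "x p \<noteq> 0"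
  shows "L \<le> plen p"
proof (rule gen_ideal_supp[of R "\<lambda>p. L \<le> plen p" Q x p])
  show "\<And>r p. r \<in> R \<Longrightarrow> r p \<noteq> 0 \<Longrightarrow> L \<le> plen p" by (rule assms(1))
  show "\<And>p1 p2 p. pcat Q p1 p2 = Some p \<Longrightarrow> L \<le> plen p2 \<Longrightarrow> L \<le> plen p" using pcat_plen by fastforce
  show "\<And>p1 p2 p. pcat Q p1 p2 = Some p \<Longrightarrow> L \<le> plen p1 \<Longrightarrow> L \<le> plen p" using pcat_plen by fastforce
qed (use assms in auto)

theorem proposition2p3:
  fixes V :: "'v set" and E :: "'e set" and ord :: "'v \<Rightarrow> 'e list"
    and m :: "'v \<Rightarrow> nat" and q :: "'e \<Rightarrow> 'v \<Rightarrow> 'k::field" and d :: nat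
  assumes "quantized_brauer_graph V E ord m q"
    and "d \<ge> 3"
  shows "(d_homogeneous (bg_quiver V E ord m) (bg_ideal V E ord m q) d \<longleftrightarrow>
           (\<exists>c n. n \<ge> 1 \<and> is_star V E ord c n \<and> n dvd (d - 1) \<and>
                  m c = (d - 1) div n \<and> (\<forall>\<alpha> \<in> V - {c}. m \<alpha> = 1))) \<and>
         (\<forall>c n. n \<ge> 1 \<and> is_star V E ord c n \<and> n dvd (d - 1) \<and>
                m c = (d - 1) div n \<and> (\<forall>\<alpha> \<in> V - {c}. m \<alpha> = 1) \<longrightarrow>
                quot_alg_iso (bg_quiver V E ord m) (bg_ideal V E ord m q)
                  (cycle_quiver n) (paths_length_ideal n d :: ((nat, nat) qpath \<Rightarrow> 'k) set))"
proof -
  have bg: "brauer_graph V E ord m" using assms(1) by (simp add: quantized_brauer_graph_def)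
  let ?Q = "bg_quiver V E ord m"
  let ?I = "bg_ideal V E ord m q"
  let ?R = "bg_relations V E ord m q"
  have RI: "\<And>r. r \<in> ?R \<Longrightarrow> r \<in> ?I" unfolding bg_ideal_def by (rule gen_ideal.gen)
  have bwd: "d_homogeneous ?Q ?I d \<and> quot_alg_iso ?Q ?I (cycle_quiver n) (paths_length_ideal n d :: ((nat, nat) qpath \<Rightarrow> 'k) set)"
    if h: "n \<ge> 1 \<and> is_star V E ord c n \<and> n dvd (d - 1) \<and> m c = (d - 1) div n \<and> (\<forall>\<alpha> \<in> V - {c}. m \<alpha> = 1)" for c n
  proof -
    have e: "m c * n = d - 1" using h by simp
    then have D: "m c * n + 1 = d" using assms(2) by simp
    interpret starctx V E ord m c n using h bg e assms(2) by unfold_locales auto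
    show ?thesis using bg_dhom[of q] bg_iso[of q] D by simp
  qed
  have fwd: "\<exists>c n. n \<ge> 1 \<and> is_star V E ord c n \<and> n dvd (d - 1) \<and>
                  m c = (d - 1) div n \<and> (\<forall>\<alpha> \<in> V - {c}. m \<alpha> = 1)"
    if dh: "d_homogeneous ?Q ?I d"
  proof -
    obtain S where S: "S \<subseteq> {f. homogeneous ?Q d f}" "gen_ideal ?Q S = ?I" using dh
      unfolding d_homogeneous_def by blast
    have Sd: "\<And>r p. r \<in> S \<Longrightarrow> r p \<noteq> 0 \<Longrightarrow> plen p = d" using S(1) by (auto simp: homogeneous_def)
    have Sd': "\<And>r p. r \<in> S \<Longrightarrow> r p \<noteq> 0 \<Longrightarrow> d \<le> plen p" using Sd by simp
    have suppI: "\<And>x p. x \<in> ?I \<Longrightarrow> x p \<noteq> 0 \<Longrightarrow> d \<le> plen p"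
    proof -
      fix x p assume "x \<in> ?I" "x p \<noteq> 0"
      then show "d \<le> plen p" by (intro supp_ge[where R=S and L=d and Q="?Q" and x=x and p=p]) (use Sd' S(2) in auto)
    qed
    have nopath: "pbasis p \<notin> ?R" if "plen p < d" for p
    proof
      assume "pbasis p \<in> ?R"
      then have "pbasis p \<in> ?I" by (rule RI)
      moreover have "(pbasis p :: _ \<Rightarrow> 'k) p \<noteq> 0" by (simp add: pbasis_def)
      ultimately show False using suppI that by fastforce
    qed
    have nA: "\<not> is_A2_11 V E ord m"
    proof
      assume A: "is_A2_11 V E ord m"
      let ?a = "(SOME \<alpha>. \<alpha> \<in> V, 0::nat)"
      have "pbasis (Arrs [?a, ?a]) \<in> ?R" using A by (simp add: bg_relations_def)
      then show False using nopath[of "Arrs [?a, ?a]"] assms(2) by simp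
    qed
    have no3: "bg_rel_three V E ord m = ({} :: (('e, 'v \<times> nat) qpath \<Rightarrow> 'k) set)"
    proof (rule ccontr)
      assume "bg_rel_three V E ord m \<noteq> ({} :: (('e, 'v \<times> nat) qpath \<Rightarrow> 'k) set)"
      then obtain r :: "('e, 'v \<times> nat) qpath \<Rightarrow> 'k" where r: "r \<in> bg_rel_three V E ord m" by blast
      then obtain a b where "r = pbasis (Arrs [a, b])" unfolding bg_rel_three_def Let_def by blast
      moreover have "r \<in> ?R" using r nA by (simp add: bg_relations_def)
      ultimately show False using nopath[of "Arrs [a, b]"] assms(2) by simp
    qed
    have allT: "\<And>s. s \<in> E \<Longrightarrow> truncated_edge V ord m s"
      using trunc_of_no3[OF bg nA no3] .
    obtain c where c: "is_star V E ord c (card E)" "\<forall>\<alpha>\<in>V - {c}. m \<alpha> = 1"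
      using star_of_trunc[OF bg nA allT] by blast
    let ?n = "card E"
    have n1: "?n \<ge> 1" using bg_facts(2,3)[OF bg] by (simp add: Suc_leI card_gt_0_iff)
    have cV: "c \<in> V" using c by (simp add: is_star_def)
    have mc2: "m c * ?n \<ge> 2"
    proof (rule ccontr)
      assume "\<not> m c * ?n \<ge> 2"
      moreover have "m c \<ge> 1" using bg_facts(7)[OF bg cV] by simp
      moreover have "m c * ?n \<ge> m c" "m c * ?n \<ge> ?n" using n1 \<open>m c \<ge> 1\<close> by simp_all
      ultimately have "m c = 1" "?n = 1" using n1 by linarith+
      then have "is_A2_11 V E ord m" using star_A2[OF bg] c by simp
      then show False using nA by simp
    qed
    interpret starctx V E ord m c ?n using bg c n1 mc2 by unfold_locales auto
    let ?D = "m c * ?n + 1"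
    have r0: "pbasis (Arrs (P 0)) \<in> ?R" using rels[of q] n1 by auto
    have "d \<le> ?D"
    proof -
      have "pbasis (Arrs (P 0)) \<in> ?I" using RI r0 .
      moreover have "(pbasis (Arrs (P 0)) :: _ \<Rightarrow> 'k) (Arrs (P 0)) \<noteq> 0" by (simp add: pbasis_def)
      ultimately show ?thesis using suppI P_len by fastforce
    qed
    moreover have "\<not> d < ?D"
    proof
      assume lt: "d < ?D"
      have RD: "\<And>r p. r \<in> ?R \<Longrightarrow> r p \<noteq> 0 \<Longrightarrow> ?D \<le> plen p"
      proof -
        fix r p assume "r \<in> ?R" "r p \<noteq> 0"
        then obtain i where "i < ?n" "r = pbasis (Arrs (P i))" "r p \<noteq> 0" using rels[of q] by blast
        then show "?D \<le> plen p" using P_len by (simp add: pbasis_def split: if_splits)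
      qed
      have S0: "\<And>r p. r \<in> S \<Longrightarrow> r p \<noteq> 0 \<Longrightarrow> False"
      proof -
        fix r p assume r: "r \<in> S" "r p \<noteq> 0"
        have "r \<in> ?I" using r(1) S(2) gen_ideal.gen by blast
        then have "?D \<le> plen p" using supp_ge[of ?R ?D r ?Q p] RD r(2) unfolding bg_ideal_def by blast
        moreover have "plen p = d" using Sd r by blast
        ultimately show False using lt by simp
      qed
      have "pbasis (Arrs (P 0)) \<in> gen_ideal ?Q S" using RI r0 S(2) by simp
      moreover have "(pbasis (Arrs (P 0)) :: _ \<Rightarrow> 'k) (Arrs (P 0)) \<noteq> 0" by (simp add: pbasis_def)
      ultimately show False using gen_ideal_supp[of S "\<lambda>_. False" ?Q "pbasis (Arrs (P 0))" "Arrs (P 0)"] S0 by blast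
    qed
    ultimately have D: "?D = d" by simp
    then have "d - 1 = m c * ?n" by simp
    then have "?n dvd (d - 1)" "m c = (d - 1) div ?n" using n1 by auto
    then show ?thesis using c n1 by blast
  qed
  show ?thesis
  proof (intro conjI allI impI)
    show "d_homogeneous ?Q ?I d = (\<exists>c n. 1 \<le> n \<and> is_star V E ord c n \<and> n dvd d - 1 \<and> m c = (d - 1) div n \<and> (\<forall>\<alpha>\<in>V - {c}. m \<alpha> = 1))"
      using fwd bwd by blast
    fix c n
    assume "1 \<le> n \<and> is_star V E ord c n \<and> n dvd d - 1 \<and> m c = (d - 1) div n \<and> (\<forall>\<alpha>\<in>V - {c}. m \<alpha> = 1)"
    then show "quot_alg_iso ?Q ?I (cycle_quiver n) (paths_length_ideal n d)" using bwd by blast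
  qed
qed


end
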